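(* Let $\mathcal{F}$ be a finite set of algebraic-valued functions on Boolean variables, and let $\mathfrak{B}$ be its set of normalized binary functions. Assume: (i) $\mathfrak{B}$ is a finite group under matrix multiplication; (ii) every binary function realizable by a gadget of $\#\mathcal{F}$ is a (possibly zero) scalar multiple of a matrix in $\mathfrak{B}$; (iii) the four matrices $I=\begin{pmatrix}1&0\\0&1\end{pmatrix}$, $X=\begin{pmatrix}i&0\\0&-i\end{pmatrix}$, $Y=\begin{pmatrix}0&1\\-1&0\end{pmatrix}$, $Z=\begin{pmatrix}0&i\\i&0\end{pmatrix}$ belong to $\mathfrak{B}$; (iv) every arity-4 function realizable by a gadget of $\#\mathcal{F}$ has the form $(x_1,x_2,x_3,x_4)\mapsto \mu\, A(x_{\sigma(1)},x_{\sigma(2)})\,B(x_{\sigma(3)},x_{\sigma(4)})$ for some $\mu\in\mathbb{C}$, $A,B\in\mathfrak{B}$ and permutation $\sigma$ of $\{1,2,3,4\}$. Let $F$ be the function of any arity-$2d$ gadget of $\#\mathcal{F}$. Then for any ordered pairings $\pi,\pi'$ of the $2d$ variables and any maps $\psi,\psi':\{1,\dots,d\}\to K=\{I,X,Y,Z\}$, if $K^{\otimes\pi,\psi}F\neq 0$ then $\dfrac{K^{\otimes\pi',\psi'}F}{K^{\otimes\pi,\psi}F}$ is a real number.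
   Context: $\#\mathcal{F}$ takes as input a finite multigraph with each vertex $v$ assigned a function $F_v\in\mathcal{F}$ of arity $\deg(v)$ (with an ordering of incident edges; self-loops and multi-edges allowed) and outputs $\sum_{\sigma:E\to\{0,1\}}\prod_v F_v(\sigma|_{E(v)})$. A gadget is such a network that additionally has dangling edges $x_1,\dots,x_m$; its function is $(x_1,\dots,x_m)\mapsto\sum_{\sigma:E\to\{0,1\}}\prod_v F_v(\cdot)$ with the dangling edges fixed to the given values; a function is realizable if it is the function of some gadget. A binary function $f$ is identified with the $2\times2$ matrix $(f(u,v))_{u,v\in\{0,1\}}$. $\mathfrak{B}=\{A/s : A\text{ realizable binary}, \det A\neq0, s^2=\det A\}$ (both square roots). An ordered pairing $\pi$ is a bijection $\{1,\dots,2d\}\to\{x_1,\dots,x_{2d}\}$ viewed as the pairs $(\pi(2j-1),\pi(2j))$, $j=1,\dots,d$. For such $\pi$ and $\psi$, $K^{\otimes\pi,\psi}F=\sum_{x\in\{0,1\}^{2d}}F(x)\prod_{j=1}^d\psi(j)\big(x_{\pi(2j-1)},x_{\pi(2j)}\big)$, where $\psi(j)(u,v)$ is the $(u,v)$ entry of the matrix $\psi(j)$. *)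

theory Defs
  imports Complex_Main "HOL-Computational_Algebra.Polynomial"
    "HOL-Combinatorics.Permutations" "HOL-Algebra.Group"
begin

(* A signature: (arity, function); the function is only meaningful on
   Boolean lists of length = arity (entry x!i is the value of variable x_{i+1}). *)
type_synonym sig = "nat \<times> (bool list \<Rightarrow> complex)"

(* Edge labels: Inl i = dangling edge x_{i+1}; Inr e = internal edge e.
   A network/gadget is a finite list of vertices, each with its signature and
   the ordered list of its incident edge labels (self-loops: a label occurs twice
   in the same list; multi-edges: several distinct labels). *)
type_synonym gadget = "(sig \<times> (nat + nat) list) list"

definition all_labels :: "gadget \<Rightarrow> (nat + nat) list" where
  "all_labels G = concat (map snd G)"

definition wf_gadget :: "sig set \<Rightarrow> nat \<Rightarrow> gadget \<Rightarrow> bool" where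
  "wf_gadget \<F> m G \<longleftrightarrow>
     (\<forall>(f, es) \<in> set G. f \<in> \<F> \<and> length es = fst f) \<and>
     (\<forall>i < m. count_list (all_labels G) (Inl i) = 1) \<and>
     (\<forall>i. m \<le> i \<longrightarrow> count_list (all_labels G) (Inl i) = 0) \<and>
     (\<forall>e. count_list (all_labels G) (Inr e) = 0 \<or> count_list (all_labels G) (Inr e) = 2)"

definition internal_edges :: "gadget \<Rightarrow> nat set" where
  "internal_edges G = {e. Inr e \<in> set (all_labels G)}"

definition gadget_fun :: "gadget \<Rightarrow> bool list \<Rightarrow> complex" where
  "gadget_fun G x =
     (\<Sum>\<sigma> \<in> {\<sigma> :: nat \<Rightarrow> bool. \<forall>e. e \<notin> internal_edges G \<longrightarrow> \<sigma> e = False}.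
        prod_list (map (\<lambda>(f, es). snd f (map (\<lambda>l. case l of Inl i \<Rightarrow> x ! i | Inr e \<Rightarrow> \<sigma> e) es)) G))"

definition realizable :: "sig set \<Rightarrow> nat \<Rightarrow> (bool list \<Rightarrow> complex) \<Rightarrow> bool" where
  "realizable \<F> n f \<longleftrightarrow>
     (\<exists>G. wf_gadget \<F> n G \<and> (\<forall>x. length x = n \<longrightarrow> f x = gadget_fun G x))"

(* binary functions = 2x2 matrices, index 0 ~ False, 1 ~ True *)
type_synonym mat2 = "bool \<Rightarrow> bool \<Rightarrow> complex"

definition realizable_bin :: "sig set \<Rightarrow> mat2 \<Rightarrow> bool" where
  "realizable_bin \<F> A \<longleftrightarrow> realizable \<F> 2 (\<lambda>x. A (x ! 0) (x ! 1))"

definition mk2 :: "complex \<Rightarrow> complex \<Rightarrow> complex \<Rightarrow> complex \<Rightarrow> mat2" where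
  "mk2 a b c d = (\<lambda>u v. if \<not> u then (if \<not> v then a else b) else (if \<not> v then c else d))"

definition det2 :: "mat2 \<Rightarrow> complex" where
  "det2 A = A False False * A True True - A False True * A True False"

definition mmul2 :: "mat2 \<Rightarrow> mat2 \<Rightarrow> mat2" where
  "mmul2 A B = (\<lambda>u v. A u False * B False v + A u True * B True v)"

definition Imat :: mat2 where "Imat = mk2 1 0 0 1"
definition Xmat :: mat2 where "Xmat = mk2 \<i> 0 0 (- \<i>)"
definition Ymat :: mat2 where "Ymat = mk2 0 1 (-1) 0"
definition Zmat :: mat2 where "Zmat = mk2 0 \<i> \<i> 0"

definition Kset :: "mat2 set" where "Kset = {Imat, Xmat, Ymat, Zmat}"

definition Bfrak :: "sig set \<Rightarrow> mat2 set" where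
  "Bfrak \<F> = {(\<lambda>u v. A u v / s) | A s. realizable_bin \<F> A \<and> det2 A \<noteq> 0 \<and> s ^ 2 = det2 A}"

definition mat_monoid :: "mat2 set \<Rightarrow> mat2 monoid" where
  "mat_monoid S = \<lparr>carrier = S, mult = mmul2, one = Imat\<rparr>"

(* ordered pairing on variables indexed 0..2d-1: pairs (pi(2j), pi(2j+1)), j < d *)
definition ordered_pairing :: "nat \<Rightarrow> (nat \<Rightarrow> nat) \<Rightarrow> bool" where
  "ordered_pairing d \<pi> \<longleftrightarrow> bij_betw \<pi> {0..<2*d} {0..<2*d}"

definition Kcontract :: "nat \<Rightarrow> (nat \<Rightarrow> nat) \<Rightarrow> (nat \<Rightarrow> mat2) \<Rightarrow> (bool list \<Rightarrow> complex) \<Rightarrow> complex" where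
  "Kcontract d \<pi> \<psi> F =
     (\<Sum>x \<in> {x :: bool list. length x = 2*d}.
        F x * (\<Prod>j<d. \<psi> j (x ! \<pi> (2*j)) (x ! \<pi> (2*j+1))))"

end

theory Submission
  imports Defs "HOL-Algebra.Multiplicative_Group"
begin

definition Cn :: "nat \<Rightarrow> nat \<Rightarrow> mat2 \<Rightarrow> ((nat\<Rightarrow>bool) \<Rightarrow> complex) \<Rightarrow> (nat\<Rightarrow>bool) \<Rightarrow> complex" where
 "Cn a b k f x = k False False * f (x(a:=False, b:=False)) + k False True * f (x(a:=False,b:=True))
   + k True False * f (x(a:=True,b:=False)) + k True True * f (x(a:=True,b:=True))"

definition nk :: "mat2 \<Rightarrow> complex" where
  "nk k = k False False ^2 + k False True ^2 + k True False ^2 + k True True ^2"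

definition Pn :: "nat \<Rightarrow> nat \<Rightarrow> mat2 \<Rightarrow> ((nat\<Rightarrow>bool) \<Rightarrow> complex) \<Rightarrow> (nat\<Rightarrow>bool) \<Rightarrow> complex" where
  "Pn a b k f x = k (x a) (x b) / nk k * Cn a b k f x"

definition sum4 :: "(mat2 \<Rightarrow> complex) \<Rightarrow> complex" where
  "sum4 \<phi> = \<phi> Imat + \<phi> Xmat + \<phi> Ymat + \<phi> Zmat"

lemma Kset_cases: "k \<in> Kset \<Longrightarrow> k = Imat \<or> k = Xmat \<or> k = Ymat \<or> k = Zmat"
  by (auto simp: Kset_def)

lemma K_vals:
  "Imat False False = 1" "Imat False True = 0" "Imat True False = 0" "Imat True True = 1"
  "Xmat False False = \<i>" "Xmat False True = 0" "Xmat True False = 0" "Xmat True True = -\<i>"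
  "Ymat False False = 0" "Ymat False True = 1" "Ymat True False = -1" "Ymat True True = 0"
  "Zmat False False = 0" "Zmat False True = \<i>" "Zmat True False = \<i>" "Zmat True True = 0"
  by (simp_all add: Imat_def Xmat_def Ymat_def Zmat_def mk2_def)

lemma nk_vals: "nk Imat = 2" "nk Xmat = -2" "nk Ymat = 2" "nk Zmat = -2"
  by (simp_all add: nk_def K_vals power2_eq_square)

lemma neq_FF: "k1 False False \<noteq> k2 False False \<Longrightarrow> k1 \<noteq> k2" by auto
lemma neq_FT: "k1 False True \<noteq> k2 False True \<Longrightarrow> k1 \<noteq> k2" by auto

lemma K_distinct: "Imat \<noteq> Xmat" "Imat \<noteq> Ymat" "Imat \<noteq> Zmat" "Xmat \<noteq> Ymat" "Xmat \<noteq> Zmat" "Ymat \<noteq> Zmat"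
  by (rule neq_FF neq_FT, simp add: K_vals)+

lemma Cn_indep: "a \<noteq> b \<Longrightarrow> Cn a b k f (x(a:=u, b:=v)) = Cn a b k f x"
  by (simp add: Cn_def fun_upd_twist)

lemma complete: assumes "a \<noteq> b" shows "f x = sum4 (\<lambda>k. Pn a b k f x)"
proof -
  have "f (y(a:=u,b:=v)) = sum4 (\<lambda>k. Pn a b k f (y(a:=u,b:=v)))" for y u v
    using assms
    by (cases u; cases v) (simp_all add: sum4_def Pn_def Cn_indep, simp_all add: Cn_def K_vals nk_vals field_simps)
  from this[of x "x a" "x b"] show ?thesis by simp
qed


definition ip :: "mat2 \<Rightarrow> mat2 \<Rightarrow> complex" where
  "ip k' k = k' False False * k False False + k' False True * k False True + k' True False * k True False + k' True True * k True True"

lemma Cn_Pn: assumes "a \<noteq> b" shows "Cn a b k' (Pn a b k f) x = ip k' k * Cn a b k f x / nk k"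
proof -
  have "Cn a b k' (Pn a b k f) x = (k' False False * k False False + k' False True * k False True
     + k' True False * k True False + k' True True * k True True) * (Cn a b k f x / nk k)"
    using assms by (simp add: Cn_def[of a b k'] Pn_def Cn_indep algebra_simps)
  then show ?thesis by (simp add: ip_def)
qed

lemma nk_nz: "k \<in> Kset \<Longrightarrow> nk k \<noteq> 0"
  by (auto dest!: Kset_cases simp: nk_vals)

lemma ip_K: assumes "k \<in> Kset" "k' \<in> Kset" shows "ip k' k = (if k' = k then nk k else 0)"
  using assms by (auto dest!: Kset_cases simp: ip_def K_vals nk_vals K_distinct)

lemma Cn_Pn_K: assumes "a \<noteq> b" "k \<in> Kset" "k' \<in> Kset"
  shows "Cn a b k' (Pn a b k f) x = (if k' = k then Cn a b k f x else 0)"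
  using Cn_Pn[OF assms(1)] ip_K[OF assms(2,3)] nk_nz[OF assms(2)] by simp

lemma Cn_comm: assumes "a \<noteq> b" "c \<noteq> e" "a \<noteq> c" "a \<noteq> e" "b \<noteq> c" "b \<noteq> e"
  shows "Cn a b k (Cn c e k' f) x = Cn c e k' (Cn a b k f) x"
  using assms by (simp add: Cn_def fun_upd_twist algebra_simps)

lemma Cn_Pn_comm: assumes "a \<noteq> b" "c \<noteq> e" "a \<noteq> c" "a \<noteq> e" "b \<noteq> c" "b \<noteq> e"
  shows "Cn c e k' (Pn a b k f) x = Pn a b k (Cn c e k' f) x"
proof -
  have "Cn c e k' (Pn a b k f) x = k (x a) (x b) / nk k * Cn c e k' (Cn a b k f) x"
    using assms by (simp add: Cn_def[of c e k'] Pn_def algebra_simps)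
  also have "\<dots> = Pn a b k (Cn c e k' f) x"
    using Cn_comm[OF assms] by (simp add: Pn_def)
  finally show ?thesis .
qed

lemma Cn_add: "Cn a b k (\<lambda>x. f x + g x) x = Cn a b k f x + Cn a b k g x"
  by (simp add: Cn_def algebra_simps)
lemma Cn_diff: "Cn a b k (\<lambda>x. f x - g x) x = Cn a b k f x - Cn a b k g x"
  by (simp add: Cn_def algebra_simps)
lemma Cn_cmult: "Cn a b k (\<lambda>x. c * f x) x = c * Cn a b k f x"
  by (simp add: Cn_def algebra_simps)
lemma Cn_divide: "Cn a b k (\<lambda>x. f x / c) x = Cn a b k f x / c"
  by (simp add: Cn_def field_simps add_divide_distrib)
lemma Cn_zero: "Cn a b k (\<lambda>x. 0) x = 0"
  by (simp add: Cn_def)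
lemma Cn_sum4: "Cn a b k (\<lambda>x. sum4 (\<lambda>j. g j x)) x = sum4 (\<lambda>j. Cn a b k (g j) x)"
  by (simp add: Cn_def sum4_def algebra_simps)
lemma Cn_if: "Cn a b k (\<lambda>x. if P then g x else 0) x = (if P then Cn a b k g x else 0)"
  by (simp add: Cn_def)
lemma Pn_divide: "Pn a b k (\<lambda>x. f x / c) x = Pn a b k f x / c"
  by (simp add: Pn_def Cn_divide)
lemma Pn_zero: "(\<forall>x. Cn a b k f x = 0) \<Longrightarrow> Pn a b k f x = 0"
  by (simp add: Pn_def)
lemma Cn_ext: "(\<forall>x. f x = g x) \<Longrightarrow> Cn a b k f x = Cn a b k g x"
  by (simp add: Cn_def)

lemma complete_zero: assumes "a \<noteq> b" "\<forall>k\<in>Kset. \<forall>x. Cn a b k f x = 0" shows "f x = 0"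
  using complete[OF assms(1), of f x] assms(2) by (simp add: sum4_def Pn_zero Kset_def)

definition flipV :: "nat set \<Rightarrow> (nat \<Rightarrow> bool) \<Rightarrow> (nat \<Rightarrow> bool)" where
  "flipV V x = (\<lambda>i. if i \<in> V then \<not> x i else x i)"
definition cnt :: "nat set \<Rightarrow> (nat \<Rightarrow> bool) \<Rightarrow> nat" where
  "cnt V x = (\<Sum>i\<in>V. of_bool (x i))"
definition thr :: "nat set \<Rightarrow> ((nat \<Rightarrow> bool) \<Rightarrow> complex) \<Rightarrow> bool" where
  "thr V f \<longleftrightarrow> (\<forall>x. f (flipV V x) = (-1)^(cnt V x) * cnj (f x))"
definition CR :: "nat set \<Rightarrow> ((nat \<Rightarrow> bool) \<Rightarrow> complex) \<Rightarrow> bool" where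
  "CR V f \<longleftrightarrow> (\<exists>c. c \<noteq> 0 \<and> thr V (\<lambda>x. f x / c))"
definition qprop :: "mat2 \<Rightarrow> bool" where
  "qprop B \<longleftrightarrow> B True True = cnj (B False False) \<and> B True False = - cnj (B False True)"

lemma qprop_flip: "qprop k \<Longrightarrow> k (\<not>u) (\<not>v) = (-1)^(of_bool u + of_bool v) * cnj (k u v)"
  by (cases u; cases v) (auto simp: qprop_def)

lemma qprop_K: "k \<in> Kset \<Longrightarrow> qprop k"
  by (auto dest!: Kset_cases simp: qprop_def K_vals)

lemma nk_real_K: "k \<in> Kset \<Longrightarrow> cnj (nk k) = nk k"
  by (auto dest!: Kset_cases simp: nk_vals)

lemma cnt_upd: assumes "finite V" "a \<in> V" "b \<in> V" "a \<noteq> b"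
  shows "cnt V (x(a:=u,b:=v)) = cnt (V - {a,b}) x + of_bool u + of_bool v"
proof -
  have "cnt V (x(a:=u,b:=v)) = of_bool u + (\<Sum>i\<in>V-{a}. of_bool ((x(a:=u,b:=v)) i))"
    unfolding cnt_def using assms by (subst sum.remove[of V a]) auto
  also have "(\<Sum>i\<in>V-{a}. of_bool ((x(a:=u,b:=v)) i)) = of_bool v + (\<Sum>i\<in>V-{a}-{b}. of_bool ((x(a:=u,b:=v)) i))"
    using assms by (subst sum.remove[of "V-{a}" b]) auto
  also have "(\<Sum>i\<in>V-{a}-{b}. of_bool ((x(a:=u,b:=v)) i)) = cnt (V - {a,b}) x"
    unfolding cnt_def by (rule sum.cong) auto
  finally show ?thesis by linarith
qed

lemma cnt_self: assumes "finite V" "a \<in> V" "b \<in> V" "a \<noteq> b"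
  shows "cnt V x = cnt (V - {a,b}) x + of_bool (x a) + of_bool (x b)"
  using cnt_upd[OF assms, of x "x a" "x b"] by simp

lemma thr_Cn: assumes "finite V" "a \<in> V" "b \<in> V" "a \<noteq> b" "qprop k" "thr V f"
  shows "thr (V - {a,b}) (Cn a b k f)"
  unfolding thr_def
proof
  fix x
  let ?C = "cnt (V - {a,b}) x"
  have trm: "k u v * f ((flipV (V - {a,b}) x)(a:=u,b:=v)) = (-1)^?C * cnj (k (\<not>u) (\<not>v) * f (x(a:=\<not>u,b:=\<not>v)))" for u v
  proof -
    have e: "(flipV (V - {a,b}) x)(a:=u,b:=v) = flipV V (x(a:=\<not>u,b:=\<not>v))"
      using assms(2-4) by (auto simp: flipV_def fun_eq_iff)
    have f1: "f (flipV V (x(a:=\<not>u,b:=\<not>v))) = (-1)^(?C + of_bool (\<not>u) + of_bool (\<not>v)) * cnj (f (x(a:=\<not>u,b:=\<not>v)))"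
      using assms(6) cnt_upd[OF assms(1-4), of x "\<not>u" "\<not>v"] unfolding thr_def by metis
    have k1: "k u v = (-1)^(of_bool (\<not>u) + of_bool (\<not>v)) * cnj (k (\<not>u) (\<not>v))"
      using qprop_flip[OF assms(5), of "\<not>u" "\<not>v"] by simp
    have p: "(-1::complex)^(of_bool (\<not>u) + of_bool (\<not>v)) * (-1)^(?C + of_bool (\<not>u) + of_bool (\<not>v)) = (-1)^?C"
      by (simp add: power_add[symmetric])
    show ?thesis unfolding e f1 k1 using p
      by (simp add: algebra_simps)
  qed
  show "Cn a b k f (flipV (V - {a, b}) x) = (-1)^?C * cnj (Cn a b k f x)"
    unfolding Cn_def trm by (simp add: algebra_simps)
qed


lemma thr_Pn: assumes "finite V" "a \<in> V" "b \<in> V" "a \<noteq> b" "qprop k" "cnj (nk k) = nk k"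
    "thr (V - {a,b}) (Cn a b k f)"
  shows "thr V (Pn a b k f)"
  unfolding thr_def
proof
  fix x
  let ?C = "cnt (V - {a,b}) x"
  have e: "flipV V x = (flipV (V - {a,b}) x)(a := \<not> x a, b := \<not> x b)"
    using assms(2-4) by (auto simp: flipV_def fun_eq_iff)
  have c1: "Cn a b k f (flipV V x) = (-1)^?C * cnj (Cn a b k f x)"
    using assms(7) unfolding e Cn_indep[OF assms(4)] thr_def by blast
  have fa: "flipV V x a = (\<not> x a)" "flipV V x b = (\<not> x b)" using assms(2,3) by (auto simp: flipV_def)
  have k1: "k (\<not> x a) (\<not> x b) = (-1)^(of_bool (x a) + of_bool (x b)) * cnj (k (x a) (x b))"
    using qprop_flip[OF assms(5)] by simp
  have cV: "cnt V x = ?C + of_bool (x a) + of_bool (x b)" using cnt_self[OF assms(1-4)] by simp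
  show "Pn a b k f (flipV V x) = (-1)^(cnt V x) * cnj (Pn a b k f x)"
    unfolding Pn_def fa c1 k1 cV using assms(6)
    by (simp add: power_add algebra_simps)
qed

lemma thr_add: "thr V f \<Longrightarrow> thr V g \<Longrightarrow> thr V (\<lambda>x. f x + g x)"
  by (simp add: thr_def algebra_simps)
lemma thr_zero: "thr V (\<lambda>x. 0)"
  by (simp add: thr_def)
lemma thr_zero': "(\<forall>x. f x = 0) \<Longrightarrow> thr V f"
  by (simp add: thr_def)
lemma thr_if: "thr V f \<Longrightarrow> thr V (\<lambda>x. if P then f x else 0)"
  by (simp add: thr_def)
lemma thr_real_mult: "r \<in> \<real> \<Longrightarrow> thr V f \<Longrightarrow> thr V (\<lambda>x. r * f x)"
  by (auto simp: thr_def Reals_cnj_iff algebra_simps)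
lemma thr_sum4: "(\<And>k. thr V (g k)) \<Longrightarrow> thr V (\<lambda>x. sum4 (\<lambda>k. g k x))"
  unfolding sum4_def by (intro thr_add) auto
lemma thr_cong: "thr V f \<Longrightarrow> (\<forall>x. f x = g x) \<Longrightarrow> thr V g"
  by (simp add: thr_def)

lemma CR_zero: "(\<forall>x. f x = 0) \<Longrightarrow> CR V f"
  unfolding CR_def by (rule exI[of _ 1]) (simp add: thr_def)

lemma CR_scale: assumes "\<alpha> \<noteq> 0" "CR V f" shows "CR V (\<lambda>x. \<alpha> * f x)"
proof -
  obtain c where c: "c \<noteq> 0" "thr V (\<lambda>x. f x / c)" using assms(2) unfolding CR_def by blast
  have "thr V (\<lambda>x. \<alpha> * f x / (\<alpha> * c))"
    using c(2) assms(1) by (simp add: thr_def)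
  then show ?thesis unfolding CR_def using c(1) assms(1) by (intro exI[of _ "\<alpha> * c"]) simp
qed

lemma ratio_real: assumes "thr W (\<lambda>x. D x / c0)" "thr W (\<lambda>x. D x / c2)" "D x0 \<noteq> 0" "c0 \<noteq> 0" "c2 \<noteq> 0"
  shows "c2 / c0 \<in> \<real>"
proof -
  have e1: "D (flipV W x0) / c0 = (-1)^(cnt W x0) * cnj (D x0 / c0)" using assms(1) unfolding thr_def by blast
  have e2: "D (flipV W x0) / c2 = (-1)^(cnt W x0) * cnj (D x0 / c2)" using assms(2) unfolding thr_def by blast
  have "cnj (c2 / c0) = c2 / c0"
  proof -
    have "c2 / c0 = (D (flipV W x0) / c0) / (D (flipV W x0) / c2)"
    proof -
      have "D (flipV W x0) \<noteq> 0" using e1 assms(3,4) by auto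
      then show ?thesis using assms(4,5) by (simp add: field_simps)
    qed
    also have "\<dots> = cnj (D x0 / c0) / cnj (D x0 / c2)" unfolding e1 e2 by simp
    also have "\<dots> = cnj (c2 / c0)" using assms(3-5) by (simp add: field_simps)
    finally show ?thesis by simp
  qed
  then show ?thesis using Reals_cnj_iff by blast
qed

definition zc :: "((nat \<Rightarrow> bool) \<Rightarrow> complex) \<Rightarrow> nat \<Rightarrow> nat \<Rightarrow> mat2 \<Rightarrow> bool" where
  "zc h p q k \<longleftrightarrow> (\<forall>x. Cn p q k h x = 0)"
definition flp :: "nat \<Rightarrow> nat \<Rightarrow> (nat \<Rightarrow> bool) \<Rightarrow> (nat \<Rightarrow> bool)" where
  "flp p q x = x(p := \<not> x p, q := \<not> x q)"
definition Zt :: "((nat \<Rightarrow> bool) \<Rightarrow> complex) \<Rightarrow> nat \<Rightarrow> nat \<Rightarrow> bool \<Rightarrow> bool" where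
  "Zt h p q s \<longleftrightarrow> (\<forall>x. h x \<noteq> 0 \<longrightarrow> (x p = x q) = s)"
definition Xt :: "((nat \<Rightarrow> bool) \<Rightarrow> complex) \<Rightarrow> nat \<Rightarrow> nat \<Rightarrow> bool \<Rightarrow> bool" where
  "Xt h p q s \<longleftrightarrow> (\<forall>x. h (flp p q x) = (if s then h x else - h x))"
definition Yt :: "((nat \<Rightarrow> bool) \<Rightarrow> complex) \<Rightarrow> nat \<Rightarrow> nat \<Rightarrow> bool \<Rightarrow> bool" where
  "Yt h p q s \<longleftrightarrow> (\<forall>x. h (flp p q x) = (if (x p = x q) = s then h x else - h x))"

lemma Cn_I: "Cn p q Imat h x = h (x(p:=False,q:=False)) + h (x(p:=True,q:=True))"
  by (simp add: Cn_def K_vals)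
lemma Cn_X: "Cn p q Xmat h x = \<i> * h (x(p:=False,q:=False)) - \<i> * h (x(p:=True,q:=True))"
  by (simp add: Cn_def K_vals)
lemma Cn_Y: "Cn p q Ymat h x = h (x(p:=False,q:=True)) - h (x(p:=True,q:=False))"
  by (simp add: Cn_def K_vals)
lemma Cn_Z: "Cn p q Zmat h x = \<i> * h (x(p:=False,q:=True)) + \<i> * h (x(p:=True,q:=False))"
  by (simp add: Cn_def K_vals)

lemma upd_self: "x(p := x p, q := x q) = x" by simp

lemma pt: assumes "p \<noteq> q" shows "h x = h ((x(p:=u,q:=v))(p := x p, q := x q))"
  using assms by (simp add: fun_upd_twist)

lemma zc_pts: assumes "p \<noteq> q" and "\<And>y u v. P (y(p:=u,q:=v))" shows "P x"
  using assms(2)[of x "x p" "x q"] by simp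

lemma flp_upd: "p \<noteq> q \<Longrightarrow> flp p q (y(p:=u,q:=v)) = y(p:=\<not>u,q:=\<not>v)"
  by (simp add: flp_def fun_upd_twist)

lemma upd_upd: "p \<noteq> q \<Longrightarrow> (y(p:=u,q:=v))(p:=u',q:=v') = y(p:=u',q:=v')"
  by (simp add: fun_upd_twist)

lemma iX: "(\<i> * a - \<i> * b = 0) = (b = (a::complex))"
proof -
  have "\<i> * a - \<i> * b = \<i> * (a - b)" by (simp add: right_diff_distrib)
  then show ?thesis by auto
qed
lemma iZ: "(\<i> * a + \<i> * b = 0) = (b = - (a::complex))"
proof -
  have "\<i> * a + \<i> * b = \<i> * (a + b)" by (simp add: distrib_left)
  then show ?thesis by (auto simp: add_eq_0_iff)
qed
lemma sY: "(a - b = 0) = (b = (a::complex))" by auto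

lemma zI_iff: "zc h p q Imat \<longleftrightarrow> (\<forall>y. h (y(p:=True,q:=True)) = - h (y(p:=False,q:=False)))"
  unfolding zc_def Cn_I add_eq_0_iff ..
lemma zX_iff: "zc h p q Xmat \<longleftrightarrow> (\<forall>y. h (y(p:=True,q:=True)) = h (y(p:=False,q:=False)))"
  unfolding zc_def Cn_X iX ..
lemma zY_iff: "zc h p q Ymat \<longleftrightarrow> (\<forall>y. h (y(p:=True,q:=False)) = h (y(p:=False,q:=True)))"
  unfolding zc_def Cn_Y sY ..
lemma zZ_iff: "zc h p q Zmat \<longleftrightarrow> (\<forall>y. h (y(p:=True,q:=False)) = - h (y(p:=False,q:=True)))"
  unfolding zc_def Cn_Z iZ ..

lemma by_pts: assumes "p \<noteq> q" "\<And>u v. P (x(p:=u,q:=v)) (x p = u \<and> x q = v)" shows "P x True"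
  using assms(2)[of "x p" "x q"] by simp


lemma flp_pt: "p \<noteq> q \<Longrightarrow> flp p q x = x(p := \<not> x p, q := \<not> x q)" by (simp add: flp_def)
lemma self_pt: "h x = h (x(p := x p, q := x q))" by simp

lemma lZF: assumes "p \<noteq> q" "zc h p q Imat" "zc h p q Xmat" shows "Zt h p q False"
  unfolding Zt_def
proof (intro allI impI)
  fix x assume hx: "h x \<noteq> 0"
  have "h (x(p:=True,q:=True)) = 0" "h (x(p:=False,q:=False)) = 0"
    using assms(2,3)[unfolded zI_iff zX_iff, rule_format, of x] by auto
  then show "(x p = x q) = False" using hx self_pt[of h x p q] by (cases "x p"; cases "x q") auto
qed
lemma lZT: assumes "p \<noteq> q" "zc h p q Ymat" "zc h p q Zmat" shows "Zt h p q True"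
  unfolding Zt_def
proof (intro allI impI)
  fix x assume hx: "h x \<noteq> 0"
  have "h (x(p:=True,q:=False)) = 0" "h (x(p:=False,q:=True)) = 0"
    using assms(2,3)[unfolded zY_iff zZ_iff, rule_format, of x] by auto
  then show "(x p = x q) = True" using hx self_pt[of h x p q] by (cases "x p"; cases "x q") auto
qed
lemma lXT: assumes "p \<noteq> q" "zc h p q Xmat" "zc h p q Ymat" shows "Xt h p q True"
  unfolding Xt_def
proof (intro allI)
  fix x
  have "h (x(p:=True,q:=True)) = h (x(p:=False,q:=False))" "h (x(p:=True,q:=False)) = h (x(p:=False,q:=True))"
    using assms(2,3)[unfolded zX_iff zY_iff, rule_format, of x] by auto
  then show "h (flp p q x) = (if True then h x else - h x)"
    using self_pt[of h x p q] flp_pt[OF assms(1), of x] by (cases "x p"; cases "x q") auto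
qed
lemma lXF: assumes "p \<noteq> q" "zc h p q Imat" "zc h p q Zmat" shows "Xt h p q False"
  unfolding Xt_def
proof (intro allI)
  fix x
  have "h (x(p:=True,q:=True)) = - h (x(p:=False,q:=False))" "h (x(p:=True,q:=False)) = - h (x(p:=False,q:=True))"
    using assms(2,3)[unfolded zI_iff zZ_iff, rule_format, of x] by auto
  then show "h (flp p q x) = (if False then h x else - h x)"
    using self_pt[of h x p q] flp_pt[OF assms(1), of x] by (cases "x p"; cases "x q") auto
qed
lemma lYF: assumes "p \<noteq> q" "zc h p q Imat" "zc h p q Ymat" shows "Yt h p q False"
  unfolding Yt_def
proof (intro allI)
  fix x
  have "h (x(p:=True,q:=True)) = - h (x(p:=False,q:=False))" "h (x(p:=True,q:=False)) = h (x(p:=False,q:=True))"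
    using assms(2,3)[unfolded zI_iff zY_iff, rule_format, of x] by auto
  then show "h (flp p q x) = (if (x p = x q) = False then h x else - h x)"
    using self_pt[of h x p q] flp_pt[OF assms(1), of x] by (cases "x p"; cases "x q") auto
qed
lemma lYT: assumes "p \<noteq> q" "zc h p q Xmat" "zc h p q Zmat" shows "Yt h p q True"
  unfolding Yt_def
proof (intro allI)
  fix x
  have "h (x(p:=True,q:=True)) = h (x(p:=False,q:=False))" "h (x(p:=True,q:=False)) = - h (x(p:=False,q:=True))"
    using assms(2,3)[unfolded zX_iff zZ_iff, rule_format, of x] by auto
  then show "h (flp p q x) = (if (x p = x q) = True then h x else - h x)"
    using self_pt[of h x p q] flp_pt[OF assms(1), of x] by (cases "x p"; cases "x q") auto
qed

lemma Zt_pt: assumes "p \<noteq> q" "Zt h p q s" "(u = v) \<noteq> s" shows "h (y(p:=u,q:=v)) = 0"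
proof (rule ccontr)
  assume "h (y(p:=u,q:=v)) \<noteq> 0"
  then have "((y(p:=u,q:=v)) p = (y(p:=u,q:=v)) q) = s" using assms(2) unfolding Zt_def by blast
  then show False using assms(1,3) by simp
qed

lemma cZF: assumes "p \<noteq> q" "Zt h p q False" shows "zc h p q Imat" "zc h p q Xmat"
  unfolding zI_iff zX_iff using Zt_pt[OF assms, of True True] Zt_pt[OF assms, of False False] by simp_all
lemma cZT: assumes "p \<noteq> q" "Zt h p q True" shows "zc h p q Ymat" "zc h p q Zmat"
  unfolding zY_iff zZ_iff using Zt_pt[OF assms, of True False] Zt_pt[OF assms, of False True] by simp_all

lemma Xt_pt: assumes "p \<noteq> q" "Xt h p q s" shows "h (y(p:=\<not>u,q:=\<not>v)) = (if s then h (y(p:=u,q:=v)) else - h (y(p:=u,q:=v)))"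
  using assms(2) flp_upd[OF assms(1), of y u v] unfolding Xt_def by metis
lemma Yt_pt: assumes "p \<noteq> q" "Yt h p q s" shows "h (y(p:=\<not>u,q:=\<not>v)) = (if (u = v) = s then h (y(p:=u,q:=v)) else - h (y(p:=u,q:=v)))"
proof -
  have "h (flp p q (y(p:=u,q:=v))) = (if ((y(p:=u,q:=v)) p = (y(p:=u,q:=v)) q) = s then h (y(p:=u,q:=v)) else - h (y(p:=u,q:=v)))"
    using assms(2) unfolding Yt_def by blast
  then show ?thesis using assms(1) by (simp add: flp_upd)
qed

lemma cXT: assumes "p \<noteq> q" "Xt h p q True" shows "zc h p q Xmat" "zc h p q Ymat"
  unfolding zX_iff zY_iff using Xt_pt[OF assms, of _ False False] Xt_pt[OF assms, of _ False True] by simp_all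
lemma cXF: assumes "p \<noteq> q" "Xt h p q False" shows "zc h p q Imat" "zc h p q Zmat"
  unfolding zI_iff zZ_iff using Xt_pt[OF assms, of _ False False] Xt_pt[OF assms, of _ False True] by simp_all
lemma cYF: assumes "p \<noteq> q" "Yt h p q False" shows "zc h p q Imat" "zc h p q Ymat"
  unfolding zI_iff zY_iff using Yt_pt[OF assms, of _ False False] Yt_pt[OF assms, of _ False True] by simp_all
lemma cYT: assumes "p \<noteq> q" "Yt h p q True" shows "zc h p q Xmat" "zc h p q Zmat"
  unfolding zX_iff zZ_iff using Yt_pt[OF assms, of _ False False] Yt_pt[OF assms, of _ False True] by simp_all

lemma flp_comm: "p \<noteq> q \<Longrightarrow> p \<noteq> r \<Longrightarrow> q \<noteq> r \<Longrightarrow> flp p q (flp p r x) = flp p r (flp p q x)"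
  by (auto simp: flp_def fun_eq_iff)
lemma flp_comp: "p \<noteq> q \<Longrightarrow> p \<noteq> r \<Longrightarrow> q \<noteq> r \<Longrightarrow> flp q r x = flp p q (flp p r x)"
  by (auto simp: flp_def fun_eq_iff)
lemma flp_app: "p \<noteq> q \<Longrightarrow> flp p q x p = (\<not> x p)" "p \<noteq> q \<Longrightarrow> flp p q x q = (\<not> x q)"
  "i \<noteq> p \<Longrightarrow> i \<noteq> q \<Longrightarrow> flp p q x i = x i"
  by (auto simp: flp_def)

lemma antiZX: assumes "p \<noteq> q" "p \<noteq> r" "q \<noteq> r" "Zt h p q s" "Xt h p r s'" shows "h x = 0"
proof (rule ccontr)
  assume hx: "h x \<noteq> 0"
  have "h (flp p r x) \<noteq> 0" using assms(5) hx unfolding Xt_def by (auto split: if_splits)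
  then show False using assms(4) hx flp_app[OF assms(2)] flp_app(3)[of q p r x] assms(1,3) unfolding Zt_def
    by (metis (full_types))
qed
lemma antiZY: assumes "p \<noteq> q" "p \<noteq> r" "q \<noteq> r" "Zt h p q s" "Yt h p r s'" shows "h x = 0"
proof (rule ccontr)
  assume hx: "h x \<noteq> 0"
  have "h (flp p r x) \<noteq> 0" using assms(5) hx unfolding Yt_def by (auto split: if_splits)
  then show False using assms(4) hx flp_app[OF assms(2)] flp_app(3)[of q p r x] assms(1,3) unfolding Zt_def
    by (metis (full_types))
qed
lemma antiXY: assumes "p \<noteq> q" "p \<noteq> r" "q \<noteq> r" "Xt h p q s" "Yt h p r s'" shows "h x = 0"
proof -
  have X: "\<And>y. h (flp p q y) = (if s then h y else - h y)" using assms(4) unfolding Xt_def by blast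
  have Y: "\<And>y. h (flp p r y) = (if (y p = y r) = s' then h y else - h y)" using assms(5) unfolding Yt_def by blast
  have a1: "flp p q x p = (\<not> x p)" "flp p q x r = x r" using flp_app[OF assms(1)] flp_app(3)[of r p q x] assms by auto
  have "h (flp p q (flp p r x)) = h (flp p r (flp p q x))" using flp_comm[OF assms(1-3)] by simp
  then have "(if s then 1 else -1) * ((if (x p = x r) = s' then 1 else -1) * h x)
     = (if (\<not> x p = x r) = s' then 1 else -1) * ((if s then 1 else -1) * h x)"
    unfolding X Y a1 by (auto split: if_splits)
  then show ?thesis by (auto split: if_splits)
qed

lemma compZ: assumes "Zt h p q sa" "Zt h p r sb" shows "Zt h q r (sa = sb)"
  using assms unfolding Zt_def by blast
lemma compX: assumes "p \<noteq> q" "p \<noteq> r" "q \<noteq> r" "Xt h p q sa" "Xt h p r sb" shows "Xt h q r (sa = sb)"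
  using assms unfolding Xt_def by (auto simp: flp_comp[OF assms(1-3)])
lemma compY: assumes "p \<noteq> q" "p \<noteq> r" "q \<noteq> r" "Yt h p q sa" "Yt h p r sb" shows "Yt h q r (sa \<noteq> sb)"
  unfolding Yt_def
proof
  fix x
  have X: "\<And>y. h (flp p q y) = (if (y p = y q) = sa then h y else - h y)" using assms(4) unfolding Yt_def by blast
  have Y: "\<And>y. h (flp p r y) = (if (y p = y r) = sb then h y else - h y)" using assms(5) unfolding Yt_def by blast
  have a1: "flp p r x p = (\<not> x p)" "flp p r x q = x q" using flp_app[OF assms(2)] flp_app(3)[of q p r x] assms by auto
  show "h (flp q r x) = (if (x q = x r) = (sa \<noteq> sb) then h x else - h x)"
    unfolding flp_comp[OF assms(1-3)] X a1 Y by (auto split: if_splits)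
qed

lemma Zt_sym: "Zt h p q s = Zt h q p s" unfolding Zt_def by metis
lemma flp_sym: "p \<noteq> q \<Longrightarrow> flp p q = flp q p" by (auto simp: flp_def fun_eq_iff)
lemma Xt_sym: "p \<noteq> q \<Longrightarrow> Xt h p q s = Xt h q p s" unfolding Xt_def by (simp add: flp_sym)
lemma Yt_sym: "p \<noteq> q \<Longrightarrow> Yt h p q s = Yt h q p s" unfolding Yt_def by (simp add: flp_sym eq_commute)


lemma K_in: "Imat \<in> Kset" "Xmat \<in> Kset" "Ymat \<in> Kset" "Zmat \<in> Kset"
  by (auto simp: Kset_def)

lemma three_qubit: assumes d: "a \<noteq> b" "a \<noteq> c" "b \<noteq> c"
 "\<forall>k\<in>Kset. (\<forall>x. Cn a b k f x = 0) \<or> (\<forall>x. Cn a b k g x = 0)"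
 "\<forall>k\<in>Kset. (\<forall>x. Cn a c k f x = 0) \<or> (\<forall>x. Cn a c k g x = 0)"
 "\<forall>k\<in>Kset. (\<forall>x. Cn b c k f x = 0) \<or> (\<forall>x. Cn b c k g x = 0)"
 shows "(\<forall>x. f x = 0) \<or> (\<forall>x. g x = 0)"
proof -
  have i1: "\<not> (zc f a b Imat \<and> zc f a b Xmat \<and> zc f a b Ymat \<and> zc f a b Zmat) \<or> (\<forall>x. f x = 0)"
    using complete_zero[OF d(1), of f] unfolding zc_def Kset_def by blast
  have i2: "zc f a b Imat \<and> zc f a b Xmat \<longrightarrow> Zt f a b False"
    using lZF[OF d(1)] by blast
  have i3: "Zt f a b False \<longrightarrow> zc f a b Imat \<and> zc f a b Xmat"
    using cZF[OF d(1)] by blast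
  have i4: "zc f a b Ymat \<and> zc f a b Zmat \<longrightarrow> Zt f a b True"
    using lZT[OF d(1)] by blast
  have i5: "Zt f a b True \<longrightarrow> zc f a b Ymat \<and> zc f a b Zmat"
    using cZT[OF d(1)] by blast
  have i6: "zc f a b Xmat \<and> zc f a b Ymat \<longrightarrow> Xt f a b True"
    using lXT[OF d(1)] by blast
  have i7: "Xt f a b True \<longrightarrow> zc f a b Xmat \<and> zc f a b Ymat"
    using cXT[OF d(1)] by blast
  have i8: "zc f a b Imat \<and> zc f a b Zmat \<longrightarrow> Xt f a b False"
    using lXF[OF d(1)] by blast
  have i9: "Xt f a b False \<longrightarrow> zc f a b Imat \<and> zc f a b Zmat"
    using cXF[OF d(1)] by blast
  have i10: "zc f a b Imat \<and> zc f a b Ymat \<longrightarrow> Yt f a b False"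
    using lYF[OF d(1)] by blast
  have i11: "Yt f a b False \<longrightarrow> zc f a b Imat \<and> zc f a b Ymat"
    using cYF[OF d(1)] by blast
  have i12: "zc f a b Xmat \<and> zc f a b Zmat \<longrightarrow> Yt f a b True"
    using lYT[OF d(1)] by blast
  have i13: "Yt f a b True \<longrightarrow> zc f a b Xmat \<and> zc f a b Zmat"
    using cYT[OF d(1)] by blast
  have i14: "\<not> (zc f a c Imat \<and> zc f a c Xmat \<and> zc f a c Ymat \<and> zc f a c Zmat) \<or> (\<forall>x. f x = 0)"
    using complete_zero[OF d(2), of f] unfolding zc_def Kset_def by blast
  have i15: "zc f a c Imat \<and> zc f a c Xmat \<longrightarrow> Zt f a c False"
    using lZF[OF d(2)] by blast
  have i16: "Zt f a c False \<longrightarrow> zc f a c Imat \<and> zc f a c Xmat"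
    using cZF[OF d(2)] by blast
  have i17: "zc f a c Ymat \<and> zc f a c Zmat \<longrightarrow> Zt f a c True"
    using lZT[OF d(2)] by blast
  have i18: "Zt f a c True \<longrightarrow> zc f a c Ymat \<and> zc f a c Zmat"
    using cZT[OF d(2)] by blast
  have i19: "zc f a c Xmat \<and> zc f a c Ymat \<longrightarrow> Xt f a c True"
    using lXT[OF d(2)] by blast
  have i20: "Xt f a c True \<longrightarrow> zc f a c Xmat \<and> zc f a c Ymat"
    using cXT[OF d(2)] by blast
  have i21: "zc f a c Imat \<and> zc f a c Zmat \<longrightarrow> Xt f a c False"
    using lXF[OF d(2)] by blast
  have i22: "Xt f a c False \<longrightarrow> zc f a c Imat \<and> zc f a c Zmat"
    using cXF[OF d(2)] by blast
  have i23: "zc f a c Imat \<and> zc f a c Ymat \<longrightarrow> Yt f a c False"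
    using lYF[OF d(2)] by blast
  have i24: "Yt f a c False \<longrightarrow> zc f a c Imat \<and> zc f a c Ymat"
    using cYF[OF d(2)] by blast
  have i25: "zc f a c Xmat \<and> zc f a c Zmat \<longrightarrow> Yt f a c True"
    using lYT[OF d(2)] by blast
  have i26: "Yt f a c True \<longrightarrow> zc f a c Xmat \<and> zc f a c Zmat"
    using cYT[OF d(2)] by blast
  have i27: "\<not> (zc f b c Imat \<and> zc f b c Xmat \<and> zc f b c Ymat \<and> zc f b c Zmat) \<or> (\<forall>x. f x = 0)"
    using complete_zero[OF d(3), of f] unfolding zc_def Kset_def by blast
  have i28: "zc f b c Imat \<and> zc f b c Xmat \<longrightarrow> Zt f b c False"
    using lZF[OF d(3)] by blast
  have i29: "Zt f b c False \<longrightarrow> zc f b c Imat \<and> zc f b c Xmat"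
    using cZF[OF d(3)] by blast
  have i30: "zc f b c Ymat \<and> zc f b c Zmat \<longrightarrow> Zt f b c True"
    using lZT[OF d(3)] by blast
  have i31: "Zt f b c True \<longrightarrow> zc f b c Ymat \<and> zc f b c Zmat"
    using cZT[OF d(3)] by blast
  have i32: "zc f b c Xmat \<and> zc f b c Ymat \<longrightarrow> Xt f b c True"
    using lXT[OF d(3)] by blast
  have i33: "Xt f b c True \<longrightarrow> zc f b c Xmat \<and> zc f b c Ymat"
    using cXT[OF d(3)] by blast
  have i34: "zc f b c Imat \<and> zc f b c Zmat \<longrightarrow> Xt f b c False"
    using lXF[OF d(3)] by blast
  have i35: "Xt f b c False \<longrightarrow> zc f b c Imat \<and> zc f b c Zmat"
    using cXF[OF d(3)] by blast
  have i36: "zc f b c Imat \<and> zc f b c Ymat \<longrightarrow> Yt f b c False"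
    using lYF[OF d(3)] by blast
  have i37: "Yt f b c False \<longrightarrow> zc f b c Imat \<and> zc f b c Ymat"
    using cYF[OF d(3)] by blast
  have i38: "zc f b c Xmat \<and> zc f b c Zmat \<longrightarrow> Yt f b c True"
    using lYT[OF d(3)] by blast
  have i39: "Yt f b c True \<longrightarrow> zc f b c Xmat \<and> zc f b c Zmat"
    using cYT[OF d(3)] by blast
  have i40: "Zt f a b True \<longrightarrow> Xt f a c True \<longrightarrow> (\<forall>x. f x = 0)"
    using antiZX[where p=a and q=b and r=c and h=f and s=True and s'=True] d by auto
  have i41: "Zt f a b True \<longrightarrow> Xt f a c False \<longrightarrow> (\<forall>x. f x = 0)"
    using antiZX[where p=a and q=b and r=c and h=f and s=True and s'=False] d by auto
  have i42: "Zt f a b False \<longrightarrow> Xt f a c True \<longrightarrow> (\<forall>x. f x = 0)"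
    using antiZX[where p=a and q=b and r=c and h=f and s=False and s'=True] d by auto
  have i43: "Zt f a b False \<longrightarrow> Xt f a c False \<longrightarrow> (\<forall>x. f x = 0)"
    using antiZX[where p=a and q=b and r=c and h=f and s=False and s'=False] d by auto
  have i44: "Zt f a b True \<longrightarrow> Xt f b c True \<longrightarrow> (\<forall>x. f x = 0)"
    using antiZX[where p=b and q=a and r=c and h=f and s=True and s'=True] d Zt_sym[where h=f and p=b and q=a and s=True] by auto
  have i45: "Zt f a b True \<longrightarrow> Xt f b c False \<longrightarrow> (\<forall>x. f x = 0)"
    using antiZX[where p=b and q=a and r=c and h=f and s=True and s'=False] d Zt_sym[where h=f and p=b and q=a and s=True] by auto
  have i46: "Zt f a b False \<longrightarrow> Xt f b c True \<longrightarrow> (\<forall>x. f x = 0)"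
    using antiZX[where p=b and q=a and r=c and h=f and s=False and s'=True] d Zt_sym[where h=f and p=b and q=a and s=False] by auto
  have i47: "Zt f a b False \<longrightarrow> Xt f b c False \<longrightarrow> (\<forall>x. f x = 0)"
    using antiZX[where p=b and q=a and r=c and h=f and s=False and s'=False] d Zt_sym[where h=f and p=b and q=a and s=False] by auto
  have i48: "Zt f a c True \<longrightarrow> Xt f a b True \<longrightarrow> (\<forall>x. f x = 0)"
    using antiZX[where p=a and q=c and r=b and h=f and s=True and s'=True] d by auto
  have i49: "Zt f a c True \<longrightarrow> Xt f a b False \<longrightarrow> (\<forall>x. f x = 0)"
    using antiZX[where p=a and q=c and r=b and h=f and s=True and s'=False] d by auto
  have i50: "Zt f a c False \<longrightarrow> Xt f a b True \<longrightarrow> (\<forall>x. f x = 0)"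
    using antiZX[where p=a and q=c and r=b and h=f and s=False and s'=True] d by auto
  have i51: "Zt f a c False \<longrightarrow> Xt f a b False \<longrightarrow> (\<forall>x. f x = 0)"
    using antiZX[where p=a and q=c and r=b and h=f and s=False and s'=False] d by auto
  have i52: "Zt f a c True \<longrightarrow> Xt f b c True \<longrightarrow> (\<forall>x. f x = 0)"
    using antiZX[where p=c and q=a and r=b and h=f and s=True and s'=True] d Zt_sym[where h=f and p=c and q=a and s=True] Xt_sym[where h=f and p=c and q=b and s=True] by auto
  have i53: "Zt f a c True \<longrightarrow> Xt f b c False \<longrightarrow> (\<forall>x. f x = 0)"
    using antiZX[where p=c and q=a and r=b and h=f and s=True and s'=False] d Zt_sym[where h=f and p=c and q=a and s=True] Xt_sym[where h=f and p=c and q=b and s=False] by auto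
  have i54: "Zt f a c False \<longrightarrow> Xt f b c True \<longrightarrow> (\<forall>x. f x = 0)"
    using antiZX[where p=c and q=a and r=b and h=f and s=False and s'=True] d Zt_sym[where h=f and p=c and q=a and s=False] Xt_sym[where h=f and p=c and q=b and s=True] by auto
  have i55: "Zt f a c False \<longrightarrow> Xt f b c False \<longrightarrow> (\<forall>x. f x = 0)"
    using antiZX[where p=c and q=a and r=b and h=f and s=False and s'=False] d Zt_sym[where h=f and p=c and q=a and s=False] Xt_sym[where h=f and p=c and q=b and s=False] by auto
  have i56: "Zt f b c True \<longrightarrow> Xt f a b True \<longrightarrow> (\<forall>x. f x = 0)"
    using antiZX[where p=b and q=c and r=a and h=f and s=True and s'=True] d Xt_sym[where h=f and p=b and q=a and s=True] by auto
  have i57: "Zt f b c True \<longrightarrow> Xt f a b False \<longrightarrow> (\<forall>x. f x = 0)"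
    using antiZX[where p=b and q=c and r=a and h=f and s=True and s'=False] d Xt_sym[where h=f and p=b and q=a and s=False] by auto
  have i58: "Zt f b c False \<longrightarrow> Xt f a b True \<longrightarrow> (\<forall>x. f x = 0)"
    using antiZX[where p=b and q=c and r=a and h=f and s=False and s'=True] d Xt_sym[where h=f and p=b and q=a and s=True] by auto
  have i59: "Zt f b c False \<longrightarrow> Xt f a b False \<longrightarrow> (\<forall>x. f x = 0)"
    using antiZX[where p=b and q=c and r=a and h=f and s=False and s'=False] d Xt_sym[where h=f and p=b and q=a and s=False] by auto
  have i60: "Zt f b c True \<longrightarrow> Xt f a c True \<longrightarrow> (\<forall>x. f x = 0)"
    using antiZX[where p=c and q=b and r=a and h=f and s=True and s'=True] d Zt_sym[where h=f and p=c and q=b and s=True] Xt_sym[where h=f and p=c and q=a and s=True] by auto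
  have i61: "Zt f b c True \<longrightarrow> Xt f a c False \<longrightarrow> (\<forall>x. f x = 0)"
    using antiZX[where p=c and q=b and r=a and h=f and s=True and s'=False] d Zt_sym[where h=f and p=c and q=b and s=True] Xt_sym[where h=f and p=c and q=a and s=False] by auto
  have i62: "Zt f b c False \<longrightarrow> Xt f a c True \<longrightarrow> (\<forall>x. f x = 0)"
    using antiZX[where p=c and q=b and r=a and h=f and s=False and s'=True] d Zt_sym[where h=f and p=c and q=b and s=False] Xt_sym[where h=f and p=c and q=a and s=True] by auto
  have i63: "Zt f b c False \<longrightarrow> Xt f a c False \<longrightarrow> (\<forall>x. f x = 0)"
    using antiZX[where p=c and q=b and r=a and h=f and s=False and s'=False] d Zt_sym[where h=f and p=c and q=b and s=False] Xt_sym[where h=f and p=c and q=a and s=False] by auto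
  have i64: "Zt f a b True \<longrightarrow> Yt f a c True \<longrightarrow> (\<forall>x. f x = 0)"
    using antiZY[where p=a and q=b and r=c and h=f and s=True and s'=True] d by auto
  have i65: "Zt f a b True \<longrightarrow> Yt f a c False \<longrightarrow> (\<forall>x. f x = 0)"
    using antiZY[where p=a and q=b and r=c and h=f and s=True and s'=False] d by auto
  have i66: "Zt f a b False \<longrightarrow> Yt f a c True \<longrightarrow> (\<forall>x. f x = 0)"
    using antiZY[where p=a and q=b and r=c and h=f and s=False and s'=True] d by auto
  have i67: "Zt f a b False \<longrightarrow> Yt f a c False \<longrightarrow> (\<forall>x. f x = 0)"
    using antiZY[where p=a and q=b and r=c and h=f and s=False and s'=False] d by auto
  have i68: "Zt f a b True \<longrightarrow> Yt f b c True \<longrightarrow> (\<forall>x. f x = 0)"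
    using antiZY[where p=b and q=a and r=c and h=f and s=True and s'=True] d Zt_sym[where h=f and p=b and q=a and s=True] by auto
  have i69: "Zt f a b True \<longrightarrow> Yt f b c False \<longrightarrow> (\<forall>x. f x = 0)"
    using antiZY[where p=b and q=a and r=c and h=f and s=True and s'=False] d Zt_sym[where h=f and p=b and q=a and s=True] by auto
  have i70: "Zt f a b False \<longrightarrow> Yt f b c True \<longrightarrow> (\<forall>x. f x = 0)"
    using antiZY[where p=b and q=a and r=c and h=f and s=False and s'=True] d Zt_sym[where h=f and p=b and q=a and s=False] by auto
  have i71: "Zt f a b False \<longrightarrow> Yt f b c False \<longrightarrow> (\<forall>x. f x = 0)"
    using antiZY[where p=b and q=a and r=c and h=f and s=False and s'=False] d Zt_sym[where h=f and p=b and q=a and s=False] by auto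
  have i72: "Zt f a c True \<longrightarrow> Yt f a b True \<longrightarrow> (\<forall>x. f x = 0)"
    using antiZY[where p=a and q=c and r=b and h=f and s=True and s'=True] d by auto
  have i73: "Zt f a c True \<longrightarrow> Yt f a b False \<longrightarrow> (\<forall>x. f x = 0)"
    using antiZY[where p=a and q=c and r=b and h=f and s=True and s'=False] d by auto
  have i74: "Zt f a c False \<longrightarrow> Yt f a b True \<longrightarrow> (\<forall>x. f x = 0)"
    using antiZY[where p=a and q=c and r=b and h=f and s=False and s'=True] d by auto
  have i75: "Zt f a c False \<longrightarrow> Yt f a b False \<longrightarrow> (\<forall>x. f x = 0)"
    using antiZY[where p=a and q=c and r=b and h=f and s=False and s'=False] d by auto
  have i76: "Zt f a c True \<longrightarrow> Yt f b c True \<longrightarrow> (\<forall>x. f x = 0)"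
    using antiZY[where p=c and q=a and r=b and h=f and s=True and s'=True] d Zt_sym[where h=f and p=c and q=a and s=True] Yt_sym[where h=f and p=c and q=b and s=True] by auto
  have i77: "Zt f a c True \<longrightarrow> Yt f b c False \<longrightarrow> (\<forall>x. f x = 0)"
    using antiZY[where p=c and q=a and r=b and h=f and s=True and s'=False] d Zt_sym[where h=f and p=c and q=a and s=True] Yt_sym[where h=f and p=c and q=b and s=False] by auto
  have i78: "Zt f a c False \<longrightarrow> Yt f b c True \<longrightarrow> (\<forall>x. f x = 0)"
    using antiZY[where p=c and q=a and r=b and h=f and s=False and s'=True] d Zt_sym[where h=f and p=c and q=a and s=False] Yt_sym[where h=f and p=c and q=b and s=True] by auto
  have i79: "Zt f a c False \<longrightarrow> Yt f b c False \<longrightarrow> (\<forall>x. f x = 0)"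
    using antiZY[where p=c and q=a and r=b and h=f and s=False and s'=False] d Zt_sym[where h=f and p=c and q=a and s=False] Yt_sym[where h=f and p=c and q=b and s=False] by auto
  have i80: "Zt f b c True \<longrightarrow> Yt f a b True \<longrightarrow> (\<forall>x. f x = 0)"
    using antiZY[where p=b and q=c and r=a and h=f and s=True and s'=True] d Yt_sym[where h=f and p=b and q=a and s=True] by auto
  have i81: "Zt f b c True \<longrightarrow> Yt f a b False \<longrightarrow> (\<forall>x. f x = 0)"
    using antiZY[where p=b and q=c and r=a and h=f and s=True and s'=False] d Yt_sym[where h=f and p=b and q=a and s=False] by auto
  have i82: "Zt f b c False \<longrightarrow> Yt f a b True \<longrightarrow> (\<forall>x. f x = 0)"
    using antiZY[where p=b and q=c and r=a and h=f and s=False and s'=True] d Yt_sym[where h=f and p=b and q=a and s=True] by auto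
  have i83: "Zt f b c False \<longrightarrow> Yt f a b False \<longrightarrow> (\<forall>x. f x = 0)"
    using antiZY[where p=b and q=c and r=a and h=f and s=False and s'=False] d Yt_sym[where h=f and p=b and q=a and s=False] by auto
  have i84: "Zt f b c True \<longrightarrow> Yt f a c True \<longrightarrow> (\<forall>x. f x = 0)"
    using antiZY[where p=c and q=b and r=a and h=f and s=True and s'=True] d Zt_sym[where h=f and p=c and q=b and s=True] Yt_sym[where h=f and p=c and q=a and s=True] by auto
  have i85: "Zt f b c True \<longrightarrow> Yt f a c False \<longrightarrow> (\<forall>x. f x = 0)"
    using antiZY[where p=c and q=b and r=a and h=f and s=True and s'=False] d Zt_sym[where h=f and p=c and q=b and s=True] Yt_sym[where h=f and p=c and q=a and s=False] by auto
  have i86: "Zt f b c False \<longrightarrow> Yt f a c True \<longrightarrow> (\<forall>x. f x = 0)"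
    using antiZY[where p=c and q=b and r=a and h=f and s=False and s'=True] d Zt_sym[where h=f and p=c and q=b and s=False] Yt_sym[where h=f and p=c and q=a and s=True] by auto
  have i87: "Zt f b c False \<longrightarrow> Yt f a c False \<longrightarrow> (\<forall>x. f x = 0)"
    using antiZY[where p=c and q=b and r=a and h=f and s=False and s'=False] d Zt_sym[where h=f and p=c and q=b and s=False] Yt_sym[where h=f and p=c and q=a and s=False] by auto
  have i88: "Xt f a b True \<longrightarrow> Yt f a c True \<longrightarrow> (\<forall>x. f x = 0)"
    using antiXY[where p=a and q=b and r=c and h=f and s=True and s'=True] d by auto
  have i89: "Xt f a b True \<longrightarrow> Yt f a c False \<longrightarrow> (\<forall>x. f x = 0)"
    using antiXY[where p=a and q=b and r=c and h=f and s=True and s'=False] d by auto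
  have i90: "Xt f a b False \<longrightarrow> Yt f a c True \<longrightarrow> (\<forall>x. f x = 0)"
    using antiXY[where p=a and q=b and r=c and h=f and s=False and s'=True] d by auto
  have i91: "Xt f a b False \<longrightarrow> Yt f a c False \<longrightarrow> (\<forall>x. f x = 0)"
    using antiXY[where p=a and q=b and r=c and h=f and s=False and s'=False] d by auto
  have i92: "Xt f a b True \<longrightarrow> Yt f b c True \<longrightarrow> (\<forall>x. f x = 0)"
    using antiXY[where p=b and q=a and r=c and h=f and s=True and s'=True] d Xt_sym[where h=f and p=b and q=a and s=True] by auto
  have i93: "Xt f a b True \<longrightarrow> Yt f b c False \<longrightarrow> (\<forall>x. f x = 0)"
    using antiXY[where p=b and q=a and r=c and h=f and s=True and s'=False] d Xt_sym[where h=f and p=b and q=a and s=True] by auto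
  have i94: "Xt f a b False \<longrightarrow> Yt f b c True \<longrightarrow> (\<forall>x. f x = 0)"
    using antiXY[where p=b and q=a and r=c and h=f and s=False and s'=True] d Xt_sym[where h=f and p=b and q=a and s=False] by auto
  have i95: "Xt f a b False \<longrightarrow> Yt f b c False \<longrightarrow> (\<forall>x. f x = 0)"
    using antiXY[where p=b and q=a and r=c and h=f and s=False and s'=False] d Xt_sym[where h=f and p=b and q=a and s=False] by auto
  have i96: "Xt f a c True \<longrightarrow> Yt f a b True \<longrightarrow> (\<forall>x. f x = 0)"
    using antiXY[where p=a and q=c and r=b and h=f and s=True and s'=True] d by auto
  have i97: "Xt f a c True \<longrightarrow> Yt f a b False \<longrightarrow> (\<forall>x. f x = 0)"
    using antiXY[where p=a and q=c and r=b and h=f and s=True and s'=False] d by auto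
  have i98: "Xt f a c False \<longrightarrow> Yt f a b True \<longrightarrow> (\<forall>x. f x = 0)"
    using antiXY[where p=a and q=c and r=b and h=f and s=False and s'=True] d by auto
  have i99: "Xt f a c False \<longrightarrow> Yt f a b False \<longrightarrow> (\<forall>x. f x = 0)"
    using antiXY[where p=a and q=c and r=b and h=f and s=False and s'=False] d by auto
  have i100: "Xt f a c True \<longrightarrow> Yt f b c True \<longrightarrow> (\<forall>x. f x = 0)"
    using antiXY[where p=c and q=a and r=b and h=f and s=True and s'=True] d Xt_sym[where h=f and p=c and q=a and s=True] Yt_sym[where h=f and p=c and q=b and s=True] by auto
  have i101: "Xt f a c True \<longrightarrow> Yt f b c False \<longrightarrow> (\<forall>x. f x = 0)"
    using antiXY[where p=c and q=a and r=b and h=f and s=True and s'=False] d Xt_sym[where h=f and p=c and q=a and s=True] Yt_sym[where h=f and p=c and q=b and s=False] by auto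
  have i102: "Xt f a c False \<longrightarrow> Yt f b c True \<longrightarrow> (\<forall>x. f x = 0)"
    using antiXY[where p=c and q=a and r=b and h=f and s=False and s'=True] d Xt_sym[where h=f and p=c and q=a and s=False] Yt_sym[where h=f and p=c and q=b and s=True] by auto
  have i103: "Xt f a c False \<longrightarrow> Yt f b c False \<longrightarrow> (\<forall>x. f x = 0)"
    using antiXY[where p=c and q=a and r=b and h=f and s=False and s'=False] d Xt_sym[where h=f and p=c and q=a and s=False] Yt_sym[where h=f and p=c and q=b and s=False] by auto
  have i104: "Xt f b c True \<longrightarrow> Yt f a b True \<longrightarrow> (\<forall>x. f x = 0)"
    using antiXY[where p=b and q=c and r=a and h=f and s=True and s'=True] d Yt_sym[where h=f and p=b and q=a and s=True] by auto
  have i105: "Xt f b c True \<longrightarrow> Yt f a b False \<longrightarrow> (\<forall>x. f x = 0)"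
    using antiXY[where p=b and q=c and r=a and h=f and s=True and s'=False] d Yt_sym[where h=f and p=b and q=a and s=False] by auto
  have i106: "Xt f b c False \<longrightarrow> Yt f a b True \<longrightarrow> (\<forall>x. f x = 0)"
    using antiXY[where p=b and q=c and r=a and h=f and s=False and s'=True] d Yt_sym[where h=f and p=b and q=a and s=True] by auto
  have i107: "Xt f b c False \<longrightarrow> Yt f a b False \<longrightarrow> (\<forall>x. f x = 0)"
    using antiXY[where p=b and q=c and r=a and h=f and s=False and s'=False] d Yt_sym[where h=f and p=b and q=a and s=False] by auto
  have i108: "Xt f b c True \<longrightarrow> Yt f a c True \<longrightarrow> (\<forall>x. f x = 0)"
    using antiXY[where p=c and q=b and r=a and h=f and s=True and s'=True] d Xt_sym[where h=f and p=c and q=b and s=True] Yt_sym[where h=f and p=c and q=a and s=True] by auto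
  have i109: "Xt f b c True \<longrightarrow> Yt f a c False \<longrightarrow> (\<forall>x. f x = 0)"
    using antiXY[where p=c and q=b and r=a and h=f and s=True and s'=False] d Xt_sym[where h=f and p=c and q=b and s=True] Yt_sym[where h=f and p=c and q=a and s=False] by auto
  have i110: "Xt f b c False \<longrightarrow> Yt f a c True \<longrightarrow> (\<forall>x. f x = 0)"
    using antiXY[where p=c and q=b and r=a and h=f and s=False and s'=True] d Xt_sym[where h=f and p=c and q=b and s=False] Yt_sym[where h=f and p=c and q=a and s=True] by auto
  have i111: "Xt f b c False \<longrightarrow> Yt f a c False \<longrightarrow> (\<forall>x. f x = 0)"
    using antiXY[where p=c and q=b and r=a and h=f and s=False and s'=False] d Xt_sym[where h=f and p=c and q=b and s=False] Yt_sym[where h=f and p=c and q=a and s=False] by auto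
  have i112: "Zt f a b True \<longrightarrow> Zt f a c True \<longrightarrow> Zt f b c True"
    using compZ[where p=a and q=b and r=c and h=f and sa=True and sb=True] d by auto
  have i113: "Zt f a b True \<longrightarrow> Zt f a c False \<longrightarrow> Zt f b c False"
    using compZ[where p=a and q=b and r=c and h=f and sa=True and sb=False] d by auto
  have i114: "Zt f a b False \<longrightarrow> Zt f a c True \<longrightarrow> Zt f b c False"
    using compZ[where p=a and q=b and r=c and h=f and sa=False and sb=True] d by auto
  have i115: "Zt f a b False \<longrightarrow> Zt f a c False \<longrightarrow> Zt f b c True"
    using compZ[where p=a and q=b and r=c and h=f and sa=False and sb=False] d by auto
  have i116: "Xt f a b True \<longrightarrow> Xt f a c True \<longrightarrow> Xt f b c True"
    using compX[where p=a and q=b and r=c and h=f and sa=True and sb=True] d by auto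
  have i117: "Xt f a b True \<longrightarrow> Xt f a c False \<longrightarrow> Xt f b c False"
    using compX[where p=a and q=b and r=c and h=f and sa=True and sb=False] d by auto
  have i118: "Xt f a b False \<longrightarrow> Xt f a c True \<longrightarrow> Xt f b c False"
    using compX[where p=a and q=b and r=c and h=f and sa=False and sb=True] d by auto
  have i119: "Xt f a b False \<longrightarrow> Xt f a c False \<longrightarrow> Xt f b c True"
    using compX[where p=a and q=b and r=c and h=f and sa=False and sb=False] d by auto
  have i120: "Yt f a b True \<longrightarrow> Yt f a c True \<longrightarrow> Yt f b c False"
    using compY[where p=a and q=b and r=c and h=f and sa=True and sb=True] d by auto
  have i121: "Yt f a b True \<longrightarrow> Yt f a c False \<longrightarrow> Yt f b c True"
    using compY[where p=a and q=b and r=c and h=f and sa=True and sb=False] d by auto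
  have i122: "Yt f a b False \<longrightarrow> Yt f a c True \<longrightarrow> Yt f b c True"
    using compY[where p=a and q=b and r=c and h=f and sa=False and sb=True] d by auto
  have i123: "Yt f a b False \<longrightarrow> Yt f a c False \<longrightarrow> Yt f b c False"
    using compY[where p=a and q=b and r=c and h=f and sa=False and sb=False] d by auto
  have i124: "Zt f a b True \<longrightarrow> Zt f b c True \<longrightarrow> Zt f a c True"
    using compZ[where p=b and q=a and r=c and h=f and sa=True and sb=True] d Zt_sym[where h=f and p=b and q=a and s=True] by auto
  have i125: "Zt f a b True \<longrightarrow> Zt f b c False \<longrightarrow> Zt f a c False"
    using compZ[where p=b and q=a and r=c and h=f and sa=True and sb=False] d Zt_sym[where h=f and p=b and q=a and s=True] by auto
  have i126: "Zt f a b False \<longrightarrow> Zt f b c True \<longrightarrow> Zt f a c False"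
    using compZ[where p=b and q=a and r=c and h=f and sa=False and sb=True] d Zt_sym[where h=f and p=b and q=a and s=False] by auto
  have i127: "Zt f a b False \<longrightarrow> Zt f b c False \<longrightarrow> Zt f a c True"
    using compZ[where p=b and q=a and r=c and h=f and sa=False and sb=False] d Zt_sym[where h=f and p=b and q=a and s=False] by auto
  have i128: "Xt f a b True \<longrightarrow> Xt f b c True \<longrightarrow> Xt f a c True"
    using compX[where p=b and q=a and r=c and h=f and sa=True and sb=True] d Xt_sym[where h=f and p=b and q=a and s=True] by auto
  have i129: "Xt f a b True \<longrightarrow> Xt f b c False \<longrightarrow> Xt f a c False"
    using compX[where p=b and q=a and r=c and h=f and sa=True and sb=False] d Xt_sym[where h=f and p=b and q=a and s=True] by auto
  have i130: "Xt f a b False \<longrightarrow> Xt f b c True \<longrightarrow> Xt f a c False"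
    using compX[where p=b and q=a and r=c and h=f and sa=False and sb=True] d Xt_sym[where h=f and p=b and q=a and s=False] by auto
  have i131: "Xt f a b False \<longrightarrow> Xt f b c False \<longrightarrow> Xt f a c True"
    using compX[where p=b and q=a and r=c and h=f and sa=False and sb=False] d Xt_sym[where h=f and p=b and q=a and s=False] by auto
  have i132: "Yt f a b True \<longrightarrow> Yt f b c True \<longrightarrow> Yt f a c False"
    using compY[where p=b and q=a and r=c and h=f and sa=True and sb=True] d Yt_sym[where h=f and p=b and q=a and s=True] by auto
  have i133: "Yt f a b True \<longrightarrow> Yt f b c False \<longrightarrow> Yt f a c True"
    using compY[where p=b and q=a and r=c and h=f and sa=True and sb=False] d Yt_sym[where h=f and p=b and q=a and s=True] by auto
  have i134: "Yt f a b False \<longrightarrow> Yt f b c True \<longrightarrow> Yt f a c True"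
    using compY[where p=b and q=a and r=c and h=f and sa=False and sb=True] d Yt_sym[where h=f and p=b and q=a and s=False] by auto
  have i135: "Yt f a b False \<longrightarrow> Yt f b c False \<longrightarrow> Yt f a c False"
    using compY[where p=b and q=a and r=c and h=f and sa=False and sb=False] d Yt_sym[where h=f and p=b and q=a and s=False] by auto
  have i136: "Zt f a c True \<longrightarrow> Zt f b c True \<longrightarrow> Zt f a b True"
    using compZ[where p=c and q=a and r=b and h=f and sa=True and sb=True] d Zt_sym[where h=f and p=c and q=a and s=True] Zt_sym[where h=f and p=c and q=b and s=True] by auto
  have i137: "Zt f a c True \<longrightarrow> Zt f b c False \<longrightarrow> Zt f a b False"
    using compZ[where p=c and q=a and r=b and h=f and sa=True and sb=False] d Zt_sym[where h=f and p=c and q=a and s=True] Zt_sym[where h=f and p=c and q=b and s=False] by auto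
  have i138: "Zt f a c False \<longrightarrow> Zt f b c True \<longrightarrow> Zt f a b False"
    using compZ[where p=c and q=a and r=b and h=f and sa=False and sb=True] d Zt_sym[where h=f and p=c and q=a and s=False] Zt_sym[where h=f and p=c and q=b and s=True] by auto
  have i139: "Zt f a c False \<longrightarrow> Zt f b c False \<longrightarrow> Zt f a b True"
    using compZ[where p=c and q=a and r=b and h=f and sa=False and sb=False] d Zt_sym[where h=f and p=c and q=a and s=False] Zt_sym[where h=f and p=c and q=b and s=False] by auto
  have i140: "Xt f a c True \<longrightarrow> Xt f b c True \<longrightarrow> Xt f a b True"
    using compX[where p=c and q=a and r=b and h=f and sa=True and sb=True] d Xt_sym[where h=f and p=c and q=a and s=True] Xt_sym[where h=f and p=c and q=b and s=True] by auto
  have i141: "Xt f a c True \<longrightarrow> Xt f b c False \<longrightarrow> Xt f a b False"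
    using compX[where p=c and q=a and r=b and h=f and sa=True and sb=False] d Xt_sym[where h=f and p=c and q=a and s=True] Xt_sym[where h=f and p=c and q=b and s=False] by auto
  have i142: "Xt f a c False \<longrightarrow> Xt f b c True \<longrightarrow> Xt f a b False"
    using compX[where p=c and q=a and r=b and h=f and sa=False and sb=True] d Xt_sym[where h=f and p=c and q=a and s=False] Xt_sym[where h=f and p=c and q=b and s=True] by auto
  have i143: "Xt f a c False \<longrightarrow> Xt f b c False \<longrightarrow> Xt f a b True"
    using compX[where p=c and q=a and r=b and h=f and sa=False and sb=False] d Xt_sym[where h=f and p=c and q=a and s=False] Xt_sym[where h=f and p=c and q=b and s=False] by auto
  have i144: "Yt f a c True \<longrightarrow> Yt f b c True \<longrightarrow> Yt f a b False"
    using compY[where p=c and q=a and r=b and h=f and sa=True and sb=True] d Yt_sym[where h=f and p=c and q=a and s=True] Yt_sym[where h=f and p=c and q=b and s=True] by auto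
  have i145: "Yt f a c True \<longrightarrow> Yt f b c False \<longrightarrow> Yt f a b True"
    using compY[where p=c and q=a and r=b and h=f and sa=True and sb=False] d Yt_sym[where h=f and p=c and q=a and s=True] Yt_sym[where h=f and p=c and q=b and s=False] by auto
  have i146: "Yt f a c False \<longrightarrow> Yt f b c True \<longrightarrow> Yt f a b True"
    using compY[where p=c and q=a and r=b and h=f and sa=False and sb=True] d Yt_sym[where h=f and p=c and q=a and s=False] Yt_sym[where h=f and p=c and q=b and s=True] by auto
  have i147: "Yt f a c False \<longrightarrow> Yt f b c False \<longrightarrow> Yt f a b False"
    using compY[where p=c and q=a and r=b and h=f and sa=False and sb=False] d Yt_sym[where h=f and p=c and q=a and s=False] Yt_sym[where h=f and p=c and q=b and s=False] by auto
  have i148: "\<not> (zc g a b Imat \<and> zc g a b Xmat \<and> zc g a b Ymat \<and> zc g a b Zmat) \<or> (\<forall>x. g x = 0)"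
    using complete_zero[OF d(1), of g] unfolding zc_def Kset_def by blast
  have i149: "zc g a b Imat \<and> zc g a b Xmat \<longrightarrow> Zt g a b False"
    using lZF[OF d(1)] by blast
  have i150: "Zt g a b False \<longrightarrow> zc g a b Imat \<and> zc g a b Xmat"
    using cZF[OF d(1)] by blast
  have i151: "zc g a b Ymat \<and> zc g a b Zmat \<longrightarrow> Zt g a b True"
    using lZT[OF d(1)] by blast
  have i152: "Zt g a b True \<longrightarrow> zc g a b Ymat \<and> zc g a b Zmat"
    using cZT[OF d(1)] by blast
  have i153: "zc g a b Xmat \<and> zc g a b Ymat \<longrightarrow> Xt g a b True"
    using lXT[OF d(1)] by blast
  have i154: "Xt g a b True \<longrightarrow> zc g a b Xmat \<and> zc g a b Ymat"
    using cXT[OF d(1)] by blast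
  have i155: "zc g a b Imat \<and> zc g a b Zmat \<longrightarrow> Xt g a b False"
    using lXF[OF d(1)] by blast
  have i156: "Xt g a b False \<longrightarrow> zc g a b Imat \<and> zc g a b Zmat"
    using cXF[OF d(1)] by blast
  have i157: "zc g a b Imat \<and> zc g a b Ymat \<longrightarrow> Yt g a b False"
    using lYF[OF d(1)] by blast
  have i158: "Yt g a b False \<longrightarrow> zc g a b Imat \<and> zc g a b Ymat"
    using cYF[OF d(1)] by blast
  have i159: "zc g a b Xmat \<and> zc g a b Zmat \<longrightarrow> Yt g a b True"
    using lYT[OF d(1)] by blast
  have i160: "Yt g a b True \<longrightarrow> zc g a b Xmat \<and> zc g a b Zmat"
    using cYT[OF d(1)] by blast
  have i161: "\<not> (zc g a c Imat \<and> zc g a c Xmat \<and> zc g a c Ymat \<and> zc g a c Zmat) \<or> (\<forall>x. g x = 0)"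
    using complete_zero[OF d(2), of g] unfolding zc_def Kset_def by blast
  have i162: "zc g a c Imat \<and> zc g a c Xmat \<longrightarrow> Zt g a c False"
    using lZF[OF d(2)] by blast
  have i163: "Zt g a c False \<longrightarrow> zc g a c Imat \<and> zc g a c Xmat"
    using cZF[OF d(2)] by blast
  have i164: "zc g a c Ymat \<and> zc g a c Zmat \<longrightarrow> Zt g a c True"
    using lZT[OF d(2)] by blast
  have i165: "Zt g a c True \<longrightarrow> zc g a c Ymat \<and> zc g a c Zmat"
    using cZT[OF d(2)] by blast
  have i166: "zc g a c Xmat \<and> zc g a c Ymat \<longrightarrow> Xt g a c True"
    using lXT[OF d(2)] by blast
  have i167: "Xt g a c True \<longrightarrow> zc g a c Xmat \<and> zc g a c Ymat"
    using cXT[OF d(2)] by blast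
  have i168: "zc g a c Imat \<and> zc g a c Zmat \<longrightarrow> Xt g a c False"
    using lXF[OF d(2)] by blast
  have i169: "Xt g a c False \<longrightarrow> zc g a c Imat \<and> zc g a c Zmat"
    using cXF[OF d(2)] by blast
  have i170: "zc g a c Imat \<and> zc g a c Ymat \<longrightarrow> Yt g a c False"
    using lYF[OF d(2)] by blast
  have i171: "Yt g a c False \<longrightarrow> zc g a c Imat \<and> zc g a c Ymat"
    using cYF[OF d(2)] by blast
  have i172: "zc g a c Xmat \<and> zc g a c Zmat \<longrightarrow> Yt g a c True"
    using lYT[OF d(2)] by blast
  have i173: "Yt g a c True \<longrightarrow> zc g a c Xmat \<and> zc g a c Zmat"
    using cYT[OF d(2)] by blast
  have i174: "\<not> (zc g b c Imat \<and> zc g b c Xmat \<and> zc g b c Ymat \<and> zc g b c Zmat) \<or> (\<forall>x. g x = 0)"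
    using complete_zero[OF d(3), of g] unfolding zc_def Kset_def by blast
  have i175: "zc g b c Imat \<and> zc g b c Xmat \<longrightarrow> Zt g b c False"
    using lZF[OF d(3)] by blast
  have i176: "Zt g b c False \<longrightarrow> zc g b c Imat \<and> zc g b c Xmat"
    using cZF[OF d(3)] by blast
  have i177: "zc g b c Ymat \<and> zc g b c Zmat \<longrightarrow> Zt g b c True"
    using lZT[OF d(3)] by blast
  have i178: "Zt g b c True \<longrightarrow> zc g b c Ymat \<and> zc g b c Zmat"
    using cZT[OF d(3)] by blast
  have i179: "zc g b c Xmat \<and> zc g b c Ymat \<longrightarrow> Xt g b c True"
    using lXT[OF d(3)] by blast
  have i180: "Xt g b c True \<longrightarrow> zc g b c Xmat \<and> zc g b c Ymat"
    using cXT[OF d(3)] by blast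
  have i181: "zc g b c Imat \<and> zc g b c Zmat \<longrightarrow> Xt g b c False"
    using lXF[OF d(3)] by blast
  have i182: "Xt g b c False \<longrightarrow> zc g b c Imat \<and> zc g b c Zmat"
    using cXF[OF d(3)] by blast
  have i183: "zc g b c Imat \<and> zc g b c Ymat \<longrightarrow> Yt g b c False"
    using lYF[OF d(3)] by blast
  have i184: "Yt g b c False \<longrightarrow> zc g b c Imat \<and> zc g b c Ymat"
    using cYF[OF d(3)] by blast
  have i185: "zc g b c Xmat \<and> zc g b c Zmat \<longrightarrow> Yt g b c True"
    using lYT[OF d(3)] by blast
  have i186: "Yt g b c True \<longrightarrow> zc g b c Xmat \<and> zc g b c Zmat"
    using cYT[OF d(3)] by blast
  have i187: "Zt g a b True \<longrightarrow> Xt g a c True \<longrightarrow> (\<forall>x. g x = 0)"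
    using antiZX[where p=a and q=b and r=c and h=g and s=True and s'=True] d by auto
  have i188: "Zt g a b True \<longrightarrow> Xt g a c False \<longrightarrow> (\<forall>x. g x = 0)"
    using antiZX[where p=a and q=b and r=c and h=g and s=True and s'=False] d by auto
  have i189: "Zt g a b False \<longrightarrow> Xt g a c True \<longrightarrow> (\<forall>x. g x = 0)"
    using antiZX[where p=a and q=b and r=c and h=g and s=False and s'=True] d by auto
  have i190: "Zt g a b False \<longrightarrow> Xt g a c False \<longrightarrow> (\<forall>x. g x = 0)"
    using antiZX[where p=a and q=b and r=c and h=g and s=False and s'=False] d by auto
  have i191: "Zt g a b True \<longrightarrow> Xt g b c True \<longrightarrow> (\<forall>x. g x = 0)"
    using antiZX[where p=b and q=a and r=c and h=g and s=True and s'=True] d Zt_sym[where h=g and p=b and q=a and s=True] by auto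
  have i192: "Zt g a b True \<longrightarrow> Xt g b c False \<longrightarrow> (\<forall>x. g x = 0)"
    using antiZX[where p=b and q=a and r=c and h=g and s=True and s'=False] d Zt_sym[where h=g and p=b and q=a and s=True] by auto
  have i193: "Zt g a b False \<longrightarrow> Xt g b c True \<longrightarrow> (\<forall>x. g x = 0)"
    using antiZX[where p=b and q=a and r=c and h=g and s=False and s'=True] d Zt_sym[where h=g and p=b and q=a and s=False] by auto
  have i194: "Zt g a b False \<longrightarrow> Xt g b c False \<longrightarrow> (\<forall>x. g x = 0)"
    using antiZX[where p=b and q=a and r=c and h=g and s=False and s'=False] d Zt_sym[where h=g and p=b and q=a and s=False] by auto
  have i195: "Zt g a c True \<longrightarrow> Xt g a b True \<longrightarrow> (\<forall>x. g x = 0)"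
    using antiZX[where p=a and q=c and r=b and h=g and s=True and s'=True] d by auto
  have i196: "Zt g a c True \<longrightarrow> Xt g a b False \<longrightarrow> (\<forall>x. g x = 0)"
    using antiZX[where p=a and q=c and r=b and h=g and s=True and s'=False] d by auto
  have i197: "Zt g a c False \<longrightarrow> Xt g a b True \<longrightarrow> (\<forall>x. g x = 0)"
    using antiZX[where p=a and q=c and r=b and h=g and s=False and s'=True] d by auto
  have i198: "Zt g a c False \<longrightarrow> Xt g a b False \<longrightarrow> (\<forall>x. g x = 0)"
    using antiZX[where p=a and q=c and r=b and h=g and s=False and s'=False] d by auto
  have i199: "Zt g a c True \<longrightarrow> Xt g b c True \<longrightarrow> (\<forall>x. g x = 0)"
    using antiZX[where p=c and q=a and r=b and h=g and s=True and s'=True] d Zt_sym[where h=g and p=c and q=a and s=True] Xt_sym[where h=g and p=c and q=b and s=True] by auto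
  have i200: "Zt g a c True \<longrightarrow> Xt g b c False \<longrightarrow> (\<forall>x. g x = 0)"
    using antiZX[where p=c and q=a and r=b and h=g and s=True and s'=False] d Zt_sym[where h=g and p=c and q=a and s=True] Xt_sym[where h=g and p=c and q=b and s=False] by auto
  have i201: "Zt g a c False \<longrightarrow> Xt g b c True \<longrightarrow> (\<forall>x. g x = 0)"
    using antiZX[where p=c and q=a and r=b and h=g and s=False and s'=True] d Zt_sym[where h=g and p=c and q=a and s=False] Xt_sym[where h=g and p=c and q=b and s=True] by auto
  have i202: "Zt g a c False \<longrightarrow> Xt g b c False \<longrightarrow> (\<forall>x. g x = 0)"
    using antiZX[where p=c and q=a and r=b and h=g and s=False and s'=False] d Zt_sym[where h=g and p=c and q=a and s=False] Xt_sym[where h=g and p=c and q=b and s=False] by auto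
  have i203: "Zt g b c True \<longrightarrow> Xt g a b True \<longrightarrow> (\<forall>x. g x = 0)"
    using antiZX[where p=b and q=c and r=a and h=g and s=True and s'=True] d Xt_sym[where h=g and p=b and q=a and s=True] by auto
  have i204: "Zt g b c True \<longrightarrow> Xt g a b False \<longrightarrow> (\<forall>x. g x = 0)"
    using antiZX[where p=b and q=c and r=a and h=g and s=True and s'=False] d Xt_sym[where h=g and p=b and q=a and s=False] by auto
  have i205: "Zt g b c False \<longrightarrow> Xt g a b True \<longrightarrow> (\<forall>x. g x = 0)"
    using antiZX[where p=b and q=c and r=a and h=g and s=False and s'=True] d Xt_sym[where h=g and p=b and q=a and s=True] by auto
  have i206: "Zt g b c False \<longrightarrow> Xt g a b False \<longrightarrow> (\<forall>x. g x = 0)"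
    using antiZX[where p=b and q=c and r=a and h=g and s=False and s'=False] d Xt_sym[where h=g and p=b and q=a and s=False] by auto
  have i207: "Zt g b c True \<longrightarrow> Xt g a c True \<longrightarrow> (\<forall>x. g x = 0)"
    using antiZX[where p=c and q=b and r=a and h=g and s=True and s'=True] d Zt_sym[where h=g and p=c and q=b and s=True] Xt_sym[where h=g and p=c and q=a and s=True] by auto
  have i208: "Zt g b c True \<longrightarrow> Xt g a c False \<longrightarrow> (\<forall>x. g x = 0)"
    using antiZX[where p=c and q=b and r=a and h=g and s=True and s'=False] d Zt_sym[where h=g and p=c and q=b and s=True] Xt_sym[where h=g and p=c and q=a and s=False] by auto
  have i209: "Zt g b c False \<longrightarrow> Xt g a c True \<longrightarrow> (\<forall>x. g x = 0)"
    using antiZX[where p=c and q=b and r=a and h=g and s=False and s'=True] d Zt_sym[where h=g and p=c and q=b and s=False] Xt_sym[where h=g and p=c and q=a and s=True] by auto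
  have i210: "Zt g b c False \<longrightarrow> Xt g a c False \<longrightarrow> (\<forall>x. g x = 0)"
    using antiZX[where p=c and q=b and r=a and h=g and s=False and s'=False] d Zt_sym[where h=g and p=c and q=b and s=False] Xt_sym[where h=g and p=c and q=a and s=False] by auto
  have i211: "Zt g a b True \<longrightarrow> Yt g a c True \<longrightarrow> (\<forall>x. g x = 0)"
    using antiZY[where p=a and q=b and r=c and h=g and s=True and s'=True] d by auto
  have i212: "Zt g a b True \<longrightarrow> Yt g a c False \<longrightarrow> (\<forall>x. g x = 0)"
    using antiZY[where p=a and q=b and r=c and h=g and s=True and s'=False] d by auto
  have i213: "Zt g a b False \<longrightarrow> Yt g a c True \<longrightarrow> (\<forall>x. g x = 0)"
    using antiZY[where p=a and q=b and r=c and h=g and s=False and s'=True] d by auto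
  have i214: "Zt g a b False \<longrightarrow> Yt g a c False \<longrightarrow> (\<forall>x. g x = 0)"
    using antiZY[where p=a and q=b and r=c and h=g and s=False and s'=False] d by auto
  have i215: "Zt g a b True \<longrightarrow> Yt g b c True \<longrightarrow> (\<forall>x. g x = 0)"
    using antiZY[where p=b and q=a and r=c and h=g and s=True and s'=True] d Zt_sym[where h=g and p=b and q=a and s=True] by auto
  have i216: "Zt g a b True \<longrightarrow> Yt g b c False \<longrightarrow> (\<forall>x. g x = 0)"
    using antiZY[where p=b and q=a and r=c and h=g and s=True and s'=False] d Zt_sym[where h=g and p=b and q=a and s=True] by auto
  have i217: "Zt g a b False \<longrightarrow> Yt g b c True \<longrightarrow> (\<forall>x. g x = 0)"
    using antiZY[where p=b and q=a and r=c and h=g and s=False and s'=True] d Zt_sym[where h=g and p=b and q=a and s=False] by auto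
  have i218: "Zt g a b False \<longrightarrow> Yt g b c False \<longrightarrow> (\<forall>x. g x = 0)"
    using antiZY[where p=b and q=a and r=c and h=g and s=False and s'=False] d Zt_sym[where h=g and p=b and q=a and s=False] by auto
  have i219: "Zt g a c True \<longrightarrow> Yt g a b True \<longrightarrow> (\<forall>x. g x = 0)"
    using antiZY[where p=a and q=c and r=b and h=g and s=True and s'=True] d by auto
  have i220: "Zt g a c True \<longrightarrow> Yt g a b False \<longrightarrow> (\<forall>x. g x = 0)"
    using antiZY[where p=a and q=c and r=b and h=g and s=True and s'=False] d by auto
  have i221: "Zt g a c False \<longrightarrow> Yt g a b True \<longrightarrow> (\<forall>x. g x = 0)"
    using antiZY[where p=a and q=c and r=b and h=g and s=False and s'=True] d by auto
  have i222: "Zt g a c False \<longrightarrow> Yt g a b False \<longrightarrow> (\<forall>x. g x = 0)"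
    using antiZY[where p=a and q=c and r=b and h=g and s=False and s'=False] d by auto
  have i223: "Zt g a c True \<longrightarrow> Yt g b c True \<longrightarrow> (\<forall>x. g x = 0)"
    using antiZY[where p=c and q=a and r=b and h=g and s=True and s'=True] d Zt_sym[where h=g and p=c and q=a and s=True] Yt_sym[where h=g and p=c and q=b and s=True] by auto
  have i224: "Zt g a c True \<longrightarrow> Yt g b c False \<longrightarrow> (\<forall>x. g x = 0)"
    using antiZY[where p=c and q=a and r=b and h=g and s=True and s'=False] d Zt_sym[where h=g and p=c and q=a and s=True] Yt_sym[where h=g and p=c and q=b and s=False] by auto
  have i225: "Zt g a c False \<longrightarrow> Yt g b c True \<longrightarrow> (\<forall>x. g x = 0)"
    using antiZY[where p=c and q=a and r=b and h=g and s=False and s'=True] d Zt_sym[where h=g and p=c and q=a and s=False] Yt_sym[where h=g and p=c and q=b and s=True] by auto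
  have i226: "Zt g a c False \<longrightarrow> Yt g b c False \<longrightarrow> (\<forall>x. g x = 0)"
    using antiZY[where p=c and q=a and r=b and h=g and s=False and s'=False] d Zt_sym[where h=g and p=c and q=a and s=False] Yt_sym[where h=g and p=c and q=b and s=False] by auto
  have i227: "Zt g b c True \<longrightarrow> Yt g a b True \<longrightarrow> (\<forall>x. g x = 0)"
    using antiZY[where p=b and q=c and r=a and h=g and s=True and s'=True] d Yt_sym[where h=g and p=b and q=a and s=True] by auto
  have i228: "Zt g b c True \<longrightarrow> Yt g a b False \<longrightarrow> (\<forall>x. g x = 0)"
    using antiZY[where p=b and q=c and r=a and h=g and s=True and s'=False] d Yt_sym[where h=g and p=b and q=a and s=False] by auto
  have i229: "Zt g b c False \<longrightarrow> Yt g a b True \<longrightarrow> (\<forall>x. g x = 0)"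
    using antiZY[where p=b and q=c and r=a and h=g and s=False and s'=True] d Yt_sym[where h=g and p=b and q=a and s=True] by auto
  have i230: "Zt g b c False \<longrightarrow> Yt g a b False \<longrightarrow> (\<forall>x. g x = 0)"
    using antiZY[where p=b and q=c and r=a and h=g and s=False and s'=False] d Yt_sym[where h=g and p=b and q=a and s=False] by auto
  have i231: "Zt g b c True \<longrightarrow> Yt g a c True \<longrightarrow> (\<forall>x. g x = 0)"
    using antiZY[where p=c and q=b and r=a and h=g and s=True and s'=True] d Zt_sym[where h=g and p=c and q=b and s=True] Yt_sym[where h=g and p=c and q=a and s=True] by auto
  have i232: "Zt g b c True \<longrightarrow> Yt g a c False \<longrightarrow> (\<forall>x. g x = 0)"
    using antiZY[where p=c and q=b and r=a and h=g and s=True and s'=False] d Zt_sym[where h=g and p=c and q=b and s=True] Yt_sym[where h=g and p=c and q=a and s=False] by auto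
  have i233: "Zt g b c False \<longrightarrow> Yt g a c True \<longrightarrow> (\<forall>x. g x = 0)"
    using antiZY[where p=c and q=b and r=a and h=g and s=False and s'=True] d Zt_sym[where h=g and p=c and q=b and s=False] Yt_sym[where h=g and p=c and q=a and s=True] by auto
  have i234: "Zt g b c False \<longrightarrow> Yt g a c False \<longrightarrow> (\<forall>x. g x = 0)"
    using antiZY[where p=c and q=b and r=a and h=g and s=False and s'=False] d Zt_sym[where h=g and p=c and q=b and s=False] Yt_sym[where h=g and p=c and q=a and s=False] by auto
  have i235: "Xt g a b True \<longrightarrow> Yt g a c True \<longrightarrow> (\<forall>x. g x = 0)"
    using antiXY[where p=a and q=b and r=c and h=g and s=True and s'=True] d by auto
  have i236: "Xt g a b True \<longrightarrow> Yt g a c False \<longrightarrow> (\<forall>x. g x = 0)"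
    using antiXY[where p=a and q=b and r=c and h=g and s=True and s'=False] d by auto
  have i237: "Xt g a b False \<longrightarrow> Yt g a c True \<longrightarrow> (\<forall>x. g x = 0)"
    using antiXY[where p=a and q=b and r=c and h=g and s=False and s'=True] d by auto
  have i238: "Xt g a b False \<longrightarrow> Yt g a c False \<longrightarrow> (\<forall>x. g x = 0)"
    using antiXY[where p=a and q=b and r=c and h=g and s=False and s'=False] d by auto
  have i239: "Xt g a b True \<longrightarrow> Yt g b c True \<longrightarrow> (\<forall>x. g x = 0)"
    using antiXY[where p=b and q=a and r=c and h=g and s=True and s'=True] d Xt_sym[where h=g and p=b and q=a and s=True] by auto
  have i240: "Xt g a b True \<longrightarrow> Yt g b c False \<longrightarrow> (\<forall>x. g x = 0)"
    using antiXY[where p=b and q=a and r=c and h=g and s=True and s'=False] d Xt_sym[where h=g and p=b and q=a and s=True] by auto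
  have i241: "Xt g a b False \<longrightarrow> Yt g b c True \<longrightarrow> (\<forall>x. g x = 0)"
    using antiXY[where p=b and q=a and r=c and h=g and s=False and s'=True] d Xt_sym[where h=g and p=b and q=a and s=False] by auto
  have i242: "Xt g a b False \<longrightarrow> Yt g b c False \<longrightarrow> (\<forall>x. g x = 0)"
    using antiXY[where p=b and q=a and r=c and h=g and s=False and s'=False] d Xt_sym[where h=g and p=b and q=a and s=False] by auto
  have i243: "Xt g a c True \<longrightarrow> Yt g a b True \<longrightarrow> (\<forall>x. g x = 0)"
    using antiXY[where p=a and q=c and r=b and h=g and s=True and s'=True] d by auto
  have i244: "Xt g a c True \<longrightarrow> Yt g a b False \<longrightarrow> (\<forall>x. g x = 0)"
    using antiXY[where p=a and q=c and r=b and h=g and s=True and s'=False] d by auto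
  have i245: "Xt g a c False \<longrightarrow> Yt g a b True \<longrightarrow> (\<forall>x. g x = 0)"
    using antiXY[where p=a and q=c and r=b and h=g and s=False and s'=True] d by auto
  have i246: "Xt g a c False \<longrightarrow> Yt g a b False \<longrightarrow> (\<forall>x. g x = 0)"
    using antiXY[where p=a and q=c and r=b and h=g and s=False and s'=False] d by auto
  have i247: "Xt g a c True \<longrightarrow> Yt g b c True \<longrightarrow> (\<forall>x. g x = 0)"
    using antiXY[where p=c and q=a and r=b and h=g and s=True and s'=True] d Xt_sym[where h=g and p=c and q=a and s=True] Yt_sym[where h=g and p=c and q=b and s=True] by auto
  have i248: "Xt g a c True \<longrightarrow> Yt g b c False \<longrightarrow> (\<forall>x. g x = 0)"
    using antiXY[where p=c and q=a and r=b and h=g and s=True and s'=False] d Xt_sym[where h=g and p=c and q=a and s=True] Yt_sym[where h=g and p=c and q=b and s=False] by auto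
  have i249: "Xt g a c False \<longrightarrow> Yt g b c True \<longrightarrow> (\<forall>x. g x = 0)"
    using antiXY[where p=c and q=a and r=b and h=g and s=False and s'=True] d Xt_sym[where h=g and p=c and q=a and s=False] Yt_sym[where h=g and p=c and q=b and s=True] by auto
  have i250: "Xt g a c False \<longrightarrow> Yt g b c False \<longrightarrow> (\<forall>x. g x = 0)"
    using antiXY[where p=c and q=a and r=b and h=g and s=False and s'=False] d Xt_sym[where h=g and p=c and q=a and s=False] Yt_sym[where h=g and p=c and q=b and s=False] by auto
  have i251: "Xt g b c True \<longrightarrow> Yt g a b True \<longrightarrow> (\<forall>x. g x = 0)"
    using antiXY[where p=b and q=c and r=a and h=g and s=True and s'=True] d Yt_sym[where h=g and p=b and q=a and s=True] by auto
  have i252: "Xt g b c True \<longrightarrow> Yt g a b False \<longrightarrow> (\<forall>x. g x = 0)"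
    using antiXY[where p=b and q=c and r=a and h=g and s=True and s'=False] d Yt_sym[where h=g and p=b and q=a and s=False] by auto
  have i253: "Xt g b c False \<longrightarrow> Yt g a b True \<longrightarrow> (\<forall>x. g x = 0)"
    using antiXY[where p=b and q=c and r=a and h=g and s=False and s'=True] d Yt_sym[where h=g and p=b and q=a and s=True] by auto
  have i254: "Xt g b c False \<longrightarrow> Yt g a b False \<longrightarrow> (\<forall>x. g x = 0)"
    using antiXY[where p=b and q=c and r=a and h=g and s=False and s'=False] d Yt_sym[where h=g and p=b and q=a and s=False] by auto
  have i255: "Xt g b c True \<longrightarrow> Yt g a c True \<longrightarrow> (\<forall>x. g x = 0)"
    using antiXY[where p=c and q=b and r=a and h=g and s=True and s'=True] d Xt_sym[where h=g and p=c and q=b and s=True] Yt_sym[where h=g and p=c and q=a and s=True] by auto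
  have i256: "Xt g b c True \<longrightarrow> Yt g a c False \<longrightarrow> (\<forall>x. g x = 0)"
    using antiXY[where p=c and q=b and r=a and h=g and s=True and s'=False] d Xt_sym[where h=g and p=c and q=b and s=True] Yt_sym[where h=g and p=c and q=a and s=False] by auto
  have i257: "Xt g b c False \<longrightarrow> Yt g a c True \<longrightarrow> (\<forall>x. g x = 0)"
    using antiXY[where p=c and q=b and r=a and h=g and s=False and s'=True] d Xt_sym[where h=g and p=c and q=b and s=False] Yt_sym[where h=g and p=c and q=a and s=True] by auto
  have i258: "Xt g b c False \<longrightarrow> Yt g a c False \<longrightarrow> (\<forall>x. g x = 0)"
    using antiXY[where p=c and q=b and r=a and h=g and s=False and s'=False] d Xt_sym[where h=g and p=c and q=b and s=False] Yt_sym[where h=g and p=c and q=a and s=False] by auto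
  have i259: "Zt g a b True \<longrightarrow> Zt g a c True \<longrightarrow> Zt g b c True"
    using compZ[where p=a and q=b and r=c and h=g and sa=True and sb=True] d by auto
  have i260: "Zt g a b True \<longrightarrow> Zt g a c False \<longrightarrow> Zt g b c False"
    using compZ[where p=a and q=b and r=c and h=g and sa=True and sb=False] d by auto
  have i261: "Zt g a b False \<longrightarrow> Zt g a c True \<longrightarrow> Zt g b c False"
    using compZ[where p=a and q=b and r=c and h=g and sa=False and sb=True] d by auto
  have i262: "Zt g a b False \<longrightarrow> Zt g a c False \<longrightarrow> Zt g b c True"
    using compZ[where p=a and q=b and r=c and h=g and sa=False and sb=False] d by auto
  have i263: "Xt g a b True \<longrightarrow> Xt g a c True \<longrightarrow> Xt g b c True"
    using compX[where p=a and q=b and r=c and h=g and sa=True and sb=True] d by auto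
  have i264: "Xt g a b True \<longrightarrow> Xt g a c False \<longrightarrow> Xt g b c False"
    using compX[where p=a and q=b and r=c and h=g and sa=True and sb=False] d by auto
  have i265: "Xt g a b False \<longrightarrow> Xt g a c True \<longrightarrow> Xt g b c False"
    using compX[where p=a and q=b and r=c and h=g and sa=False and sb=True] d by auto
  have i266: "Xt g a b False \<longrightarrow> Xt g a c False \<longrightarrow> Xt g b c True"
    using compX[where p=a and q=b and r=c and h=g and sa=False and sb=False] d by auto
  have i267: "Yt g a b True \<longrightarrow> Yt g a c True \<longrightarrow> Yt g b c False"
    using compY[where p=a and q=b and r=c and h=g and sa=True and sb=True] d by auto
  have i268: "Yt g a b True \<longrightarrow> Yt g a c False \<longrightarrow> Yt g b c True"
    using compY[where p=a and q=b and r=c and h=g and sa=True and sb=False] d by auto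
  have i269: "Yt g a b False \<longrightarrow> Yt g a c True \<longrightarrow> Yt g b c True"
    using compY[where p=a and q=b and r=c and h=g and sa=False and sb=True] d by auto
  have i270: "Yt g a b False \<longrightarrow> Yt g a c False \<longrightarrow> Yt g b c False"
    using compY[where p=a and q=b and r=c and h=g and sa=False and sb=False] d by auto
  have i271: "Zt g a b True \<longrightarrow> Zt g b c True \<longrightarrow> Zt g a c True"
    using compZ[where p=b and q=a and r=c and h=g and sa=True and sb=True] d Zt_sym[where h=g and p=b and q=a and s=True] by auto
  have i272: "Zt g a b True \<longrightarrow> Zt g b c False \<longrightarrow> Zt g a c False"
    using compZ[where p=b and q=a and r=c and h=g and sa=True and sb=False] d Zt_sym[where h=g and p=b and q=a and s=True] by auto
  have i273: "Zt g a b False \<longrightarrow> Zt g b c True \<longrightarrow> Zt g a c False"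
    using compZ[where p=b and q=a and r=c and h=g and sa=False and sb=True] d Zt_sym[where h=g and p=b and q=a and s=False] by auto
  have i274: "Zt g a b False \<longrightarrow> Zt g b c False \<longrightarrow> Zt g a c True"
    using compZ[where p=b and q=a and r=c and h=g and sa=False and sb=False] d Zt_sym[where h=g and p=b and q=a and s=False] by auto
  have i275: "Xt g a b True \<longrightarrow> Xt g b c True \<longrightarrow> Xt g a c True"
    using compX[where p=b and q=a and r=c and h=g and sa=True and sb=True] d Xt_sym[where h=g and p=b and q=a and s=True] by auto
  have i276: "Xt g a b True \<longrightarrow> Xt g b c False \<longrightarrow> Xt g a c False"
    using compX[where p=b and q=a and r=c and h=g and sa=True and sb=False] d Xt_sym[where h=g and p=b and q=a and s=True] by auto
  have i277: "Xt g a b False \<longrightarrow> Xt g b c True \<longrightarrow> Xt g a c False"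
    using compX[where p=b and q=a and r=c and h=g and sa=False and sb=True] d Xt_sym[where h=g and p=b and q=a and s=False] by auto
  have i278: "Xt g a b False \<longrightarrow> Xt g b c False \<longrightarrow> Xt g a c True"
    using compX[where p=b and q=a and r=c and h=g and sa=False and sb=False] d Xt_sym[where h=g and p=b and q=a and s=False] by auto
  have i279: "Yt g a b True \<longrightarrow> Yt g b c True \<longrightarrow> Yt g a c False"
    using compY[where p=b and q=a and r=c and h=g and sa=True and sb=True] d Yt_sym[where h=g and p=b and q=a and s=True] by auto
  have i280: "Yt g a b True \<longrightarrow> Yt g b c False \<longrightarrow> Yt g a c True"
    using compY[where p=b and q=a and r=c and h=g and sa=True and sb=False] d Yt_sym[where h=g and p=b and q=a and s=True] by auto
  have i281: "Yt g a b False \<longrightarrow> Yt g b c True \<longrightarrow> Yt g a c True"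
    using compY[where p=b and q=a and r=c and h=g and sa=False and sb=True] d Yt_sym[where h=g and p=b and q=a and s=False] by auto
  have i282: "Yt g a b False \<longrightarrow> Yt g b c False \<longrightarrow> Yt g a c False"
    using compY[where p=b and q=a and r=c and h=g and sa=False and sb=False] d Yt_sym[where h=g and p=b and q=a and s=False] by auto
  have i283: "Zt g a c True \<longrightarrow> Zt g b c True \<longrightarrow> Zt g a b True"
    using compZ[where p=c and q=a and r=b and h=g and sa=True and sb=True] d Zt_sym[where h=g and p=c and q=a and s=True] Zt_sym[where h=g and p=c and q=b and s=True] by auto
  have i284: "Zt g a c True \<longrightarrow> Zt g b c False \<longrightarrow> Zt g a b False"
    using compZ[where p=c and q=a and r=b and h=g and sa=True and sb=False] d Zt_sym[where h=g and p=c and q=a and s=True] Zt_sym[where h=g and p=c and q=b and s=False] by auto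
  have i285: "Zt g a c False \<longrightarrow> Zt g b c True \<longrightarrow> Zt g a b False"
    using compZ[where p=c and q=a and r=b and h=g and sa=False and sb=True] d Zt_sym[where h=g and p=c and q=a and s=False] Zt_sym[where h=g and p=c and q=b and s=True] by auto
  have i286: "Zt g a c False \<longrightarrow> Zt g b c False \<longrightarrow> Zt g a b True"
    using compZ[where p=c and q=a and r=b and h=g and sa=False and sb=False] d Zt_sym[where h=g and p=c and q=a and s=False] Zt_sym[where h=g and p=c and q=b and s=False] by auto
  have i287: "Xt g a c True \<longrightarrow> Xt g b c True \<longrightarrow> Xt g a b True"
    using compX[where p=c and q=a and r=b and h=g and sa=True and sb=True] d Xt_sym[where h=g and p=c and q=a and s=True] Xt_sym[where h=g and p=c and q=b and s=True] by auto
  have i288: "Xt g a c True \<longrightarrow> Xt g b c False \<longrightarrow> Xt g a b False"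
    using compX[where p=c and q=a and r=b and h=g and sa=True and sb=False] d Xt_sym[where h=g and p=c and q=a and s=True] Xt_sym[where h=g and p=c and q=b and s=False] by auto
  have i289: "Xt g a c False \<longrightarrow> Xt g b c True \<longrightarrow> Xt g a b False"
    using compX[where p=c and q=a and r=b and h=g and sa=False and sb=True] d Xt_sym[where h=g and p=c and q=a and s=False] Xt_sym[where h=g and p=c and q=b and s=True] by auto
  have i290: "Xt g a c False \<longrightarrow> Xt g b c False \<longrightarrow> Xt g a b True"
    using compX[where p=c and q=a and r=b and h=g and sa=False and sb=False] d Xt_sym[where h=g and p=c and q=a and s=False] Xt_sym[where h=g and p=c and q=b and s=False] by auto
  have i291: "Yt g a c True \<longrightarrow> Yt g b c True \<longrightarrow> Yt g a b False"
    using compY[where p=c and q=a and r=b and h=g and sa=True and sb=True] d Yt_sym[where h=g and p=c and q=a and s=True] Yt_sym[where h=g and p=c and q=b and s=True] by auto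
  have i292: "Yt g a c True \<longrightarrow> Yt g b c False \<longrightarrow> Yt g a b True"
    using compY[where p=c and q=a and r=b and h=g and sa=True and sb=False] d Yt_sym[where h=g and p=c and q=a and s=True] Yt_sym[where h=g and p=c and q=b and s=False] by auto
  have i293: "Yt g a c False \<longrightarrow> Yt g b c True \<longrightarrow> Yt g a b True"
    using compY[where p=c and q=a and r=b and h=g and sa=False and sb=True] d Yt_sym[where h=g and p=c and q=a and s=False] Yt_sym[where h=g and p=c and q=b and s=True] by auto
  have i294: "Yt g a c False \<longrightarrow> Yt g b c False \<longrightarrow> Yt g a b False"
    using compY[where p=c and q=a and r=b and h=g and sa=False and sb=False] d Yt_sym[where h=g and p=c and q=a and s=False] Yt_sym[where h=g and p=c and q=b and s=False] by auto
  have i295: "zc f a b Imat \<or> zc g a b Imat"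
    using assms(4) K_in unfolding zc_def by blast
  have i296: "zc f a b Xmat \<or> zc g a b Xmat"
    using assms(4) K_in unfolding zc_def by blast
  have i297: "zc f a b Ymat \<or> zc g a b Ymat"
    using assms(4) K_in unfolding zc_def by blast
  have i298: "zc f a b Zmat \<or> zc g a b Zmat"
    using assms(4) K_in unfolding zc_def by blast
  have i299: "zc f a c Imat \<or> zc g a c Imat"
    using assms(5) K_in unfolding zc_def by blast
  have i300: "zc f a c Xmat \<or> zc g a c Xmat"
    using assms(5) K_in unfolding zc_def by blast
  have i301: "zc f a c Ymat \<or> zc g a c Ymat"
    using assms(5) K_in unfolding zc_def by blast
  have i302: "zc f a c Zmat \<or> zc g a c Zmat"
    using assms(5) K_in unfolding zc_def by blast
  have i303: "zc f b c Imat \<or> zc g b c Imat"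
    using assms(6) K_in unfolding zc_def by blast
  have i304: "zc f b c Xmat \<or> zc g b c Xmat"
    using assms(6) K_in unfolding zc_def by blast
  have i305: "zc f b c Ymat \<or> zc g b c Ymat"
    using assms(6) K_in unfolding zc_def by blast
  have i306: "zc f b c Zmat \<or> zc g b c Zmat"
    using assms(6) K_in unfolding zc_def by blast
  show ?thesis using i1 i2 i3 i4 i5 i6 i7 i8 i9 i10 i11 i12 i13 i14 i15 i16 i17 i18 i19 i20 i21 i22 i23 i24 i25 i26 i27 i28 i29 i30 i31 i32 i33 i34 i35 i36 i37 i38 i39 i40 i41 i42 i43 i44 i45 i46 i47 i48 i49 i50 i51 i52 i53 i54 i55 i56 i57 i58 i59 i60 i61 i62 i63 i64 i65 i66 i67 i68 i69 i70 i71 i72 i73 i74 i75 i76 i77 i78 i79 i80 i81 i82 i83 i84 i85 i86 i87 i88 i89 i90 i91 i92 i93 i94 i95 i96 i97 i98 i99 i100 i101 i102 i103 i104 i105 i106 i107 i108 i109 i110 i111 i112 i113 i114 i115 i116 i117 i118 i119 i120 i121 i122 i123 i124 i125 i126 i127 i128 i129 i130 i131 i132 i133 i134 i135 i136 i137 i138 i139 i140 i141 i142 i143 i144 i145 i146 i147 i148 i149 i150 i151 i152 i153 i154 i155 i156 i157 i158 i159 i160 i161 i162 i163 i164 i165 i166 i167 i168 i169 i170 i171 i172 i173 i174 i175 i176 i177 i178 i179 i180 i181 i182 i183 i184 i185 i186 i187 i188 i189 i190 i191 i192 i193 i194 i195 i196 i197 i198 i199 i200 i201 i202 i203 i204 i205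 i206 i207 i208 i209 i210 i211 i212 i213 i214 i215 i216 i217 i218 i219 i220 i221 i222 i223 i224 i225 i226 i227 i228 i229 i230 i231 i232 i233 i234 i235 i236 i237 i238 i239 i240 i241 i242 i243 i244 i245 i246 i247 i248 i249 i250 i251 i252 i253 i254 i255 i256 i257 i258 i259 i260 i261 i262 i263 i264 i265 i266 i267 i268 i269 i270 i271 i272 i273 i274 i275 i276 i277 i278 i279 i280 i281 i282 i283 i284 i285 i286 i287 i288 i289 i290 i291 i292 i293 i294 i295 i296 i297 i298 i299 i300 i301 i302 i303 i304 i305 i306 by sat
qed

locale stepctx =
  fixes V :: "nat set" and F :: "(nat \<Rightarrow> bool) \<Rightarrow> complex" and c0 :: complex
  assumes finV: "finite V"
    and IHC: "\<And>a b k. a \<in> V \<Longrightarrow> b \<in> V \<Longrightarrow> a \<noteq> b \<Longrightarrow> k \<in> Kset \<Longrightarrow> CR (V - {a,b}) (Cn a b k F)"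
    and c0nz: "c0 \<noteq> 0"
begin

definition good :: "nat \<Rightarrow> nat \<Rightarrow> mat2 \<Rightarrow> bool" where
  "good a b k \<longleftrightarrow> thr (V - {a,b}) (\<lambda>x. Cn a b k F x / c0)"

definition Q :: "nat \<Rightarrow> nat \<Rightarrow> (nat \<Rightarrow> bool) \<Rightarrow> complex" where
  "Q a b x = sum4 (\<lambda>k. if good a b k then Pn a b k F x else 0)"

lemma transfer:
  assumes V: "a \<in> V" "b \<in> V" "c \<in> V" "e \<in> V"
    and d: "a \<noteq> b" "c \<noteq> e" "a \<noteq> c" "a \<noteq> e" "b \<noteq> c" "b \<noteq> e"
    and k: "k \<in> Kset" "k' \<in> Kset"
    and nz: "Cn a b k (Cn c e k' F) x0 \<noteq> 0"
    and g: "good a b k"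
  shows "good c e k'"
proof -
  have set_eq: "V - {a,b} - {c,e} = V - {c,e} - {a,b}" by auto
  have t1: "thr (V - {a,b} - {c,e}) (Cn c e k' (\<lambda>x. Cn a b k F x / c0))"
    by (rule thr_Cn) (use finV V d qprop_K[OF k(2)] g[unfolded good_def] in auto)
  have t1': "thr (V - {c,e} - {a,b}) (\<lambda>x. Cn a b k (Cn c e k' F) x / c0)"
    using t1 unfolding set_eq
    by (rule thr_cong) (simp add: Cn_divide Cn_comm[OF d])
  obtain c2 where c2: "c2 \<noteq> 0" "thr (V - {c,e}) (\<lambda>x. Cn c e k' F x / c2)"
    using IHC[OF V(3,4) d(2) k(2)] unfolding CR_def by blast
  have t2: "thr (V - {c,e} - {a,b}) (Cn a b k (\<lambda>x. Cn c e k' F x / c2))"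
    by (rule thr_Cn) (use finV V d qprop_K[OF k(1)] c2(2) in auto)
  have t2': "thr (V - {c,e} - {a,b}) (\<lambda>x. Cn a b k (Cn c e k' F) x / c2)"
    using t2 by (rule thr_cong) (simp add: Cn_divide)
  have r: "c2 / c0 \<in> \<real>" by (rule ratio_real[OF t1' t2' nz c0nz c2(1)])
  have "thr (V - {c,e}) (\<lambda>x. (c2 / c0) * (Cn c e k' F x / c2))"
    by (rule thr_real_mult[OF r c2(2)])
  then show ?thesis unfolding good_def
    by (rule thr_cong) (use c2(1) in simp)
qed

lemma good_iff:
  assumes V: "a \<in> V" "b \<in> V" "c \<in> V" "e \<in> V"
    and d: "a \<noteq> b" "c \<noteq> e" "a \<noteq> c" "a \<noteq> e" "b \<noteq> c" "b \<noteq> e"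
    and k: "k \<in> Kset" "k' \<in> Kset"
    and nz: "Cn a b k (Cn c e k' F) x0 \<noteq> 0"
  shows "good a b k = good c e k'"
proof
  assume "good a b k" then show "good c e k'" by (rule transfer[OF V d k nz])
next
  assume g: "good c e k'"
  have nz': "Cn c e k' (Cn a b k F) x0 \<noteq> 0" using nz Cn_comm[OF d] by simp
  show "good a b k"
    by (rule transfer[OF V(3,4,1,2) d(2,1) _ _ _ _ k(2,1) nz' g]) (use d in auto)
qed

lemma Cn_Q_disj:
  assumes V: "a \<in> V" "b \<in> V" "c \<in> V" "e \<in> V"
    and d: "a \<noteq> b" "c \<noteq> e" "a \<noteq> c" "a \<noteq> e" "b \<noteq> c" "b \<noteq> e"
    and k': "k' \<in> Kset"
  shows "Cn c e k' (Q a b) x = (if good c e k' then Cn c e k' F x else 0)"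
proof -
  let ?G = "Cn c e k' F"
  have "Cn c e k' (Q a b) x = sum4 (\<lambda>k. if good a b k then Cn c e k' (Pn a b k F) x else 0)"
    unfolding Q_def by (simp add: Cn_sum4 Cn_if)
  also have "\<dots> = sum4 (\<lambda>k. if good a b k then Pn a b k ?G x else 0)"
    by (rule arg_cong[where f=sum4]) (simp add: fun_eq_iff Cn_Pn_comm[OF d])
  also have "\<dots> = sum4 (\<lambda>k. if good c e k' then Pn a b k ?G x else 0)"
  proof -
    have "(if good a b k then Pn a b k ?G x else 0) = (if good c e k' then Pn a b k ?G x else 0)"
      if k: "k \<in> Kset" for k
    proof (cases "\<forall>y. Cn a b k ?G y = 0")
      case True then show ?thesis by (simp add: Pn_zero)
    next
      case False
      then obtain x0 where "Cn a b k ?G x0 \<noteq> 0" by blast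
      then have "good a b k = good c e k'" by (rule good_iff[OF V d k k'])
      then show ?thesis by simp
    qed
    then show ?thesis unfolding sum4_def using K_in by simp
  qed
  also have "\<dots> = (if good c e k' then ?G x else 0)"
    using complete[OF d(1), of ?G x] by (simp add: sum4_def)
  finally show ?thesis .
qed

lemma Cn_Q_self:
  assumes d: "a \<noteq> b" and k': "k' \<in> Kset"
  shows "Cn a b k' (Q a b) x = (if good a b k' then Cn a b k' F x else 0)"
proof -
  have "Cn a b k' (Q a b) x = sum4 (\<lambda>k. if good a b k then Cn a b k' (Pn a b k F) x else 0)"
    unfolding Q_def by (simp add: Cn_sum4 Cn_if)
  also have "\<dots> = sum4 (\<lambda>k. if good a b k then (if k' = k then Cn a b k F x else 0) else 0)"
    unfolding sum4_def using Cn_Pn_K[OF d _ k'] K_in by simp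
  also have "\<dots> = (if good a b k' then Cn a b k' F x else 0)"
    using k' by (auto dest!: Kset_cases simp: sum4_def K_distinct K_distinct[symmetric])
  finally show ?thesis .
qed

lemma Q_eq:
  assumes V: "a \<in> V" "b \<in> V" "c \<in> V" "e \<in> V"
    and d: "a \<noteq> b" "c \<noteq> e" "a \<noteq> c" "a \<noteq> e" "b \<noteq> c" "b \<noteq> e"
  shows "Q a b x = Q c e x"
proof -
  have "Q a b x - Q c e x = 0"
  proof (rule complete_zero[OF d(2), of "\<lambda>x. Q a b x - Q c e x"], intro ballI allI)
    fix k y assume k: "k \<in> Kset"
    show "Cn c e k (\<lambda>x. Q a b x - Q c e x) y = 0"
      unfolding Cn_diff Cn_Q_disj[OF V d k] Cn_Q_self[OF d(2) k] by simp
  qed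
  then show ?thesis by simp
qed

end


lemma thr_sum4K: "(\<And>k. k \<in> Kset \<Longrightarrow> thr V (g k)) \<Longrightarrow> thr V (\<lambda>x. sum4 (\<lambda>k. g k x))"
  unfolding sum4_def by (intro thr_add) (auto simp: K_in)

lemma pick: "finite A \<Longrightarrow> finite B \<Longrightarrow> card B < card A \<Longrightarrow> \<exists>x\<in>A. x \<notin> B"
  by (metis card_mono subsetI not_le)

lemma step:
  assumes finV: "finite V" and card6: "card V \<ge> 6"
    and IHC: "\<And>a b k. a \<in> V \<Longrightarrow> b \<in> V \<Longrightarrow> a \<noteq> b \<Longrightarrow> k \<in> Kset \<Longrightarrow> CR (V - {a,b}) (Cn a b k F)"
  shows "CR V F"
proof (cases "\<forall>x. F x = 0")
  case True then show ?thesis by (rule CR_zero)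
next
  case False
  then obtain xF where xF: "F xF \<noteq> 0" by blast
  obtain a0 where a0: "a0 \<in> V" using pick[OF finV, of "{}"] card6 by auto
  obtain b0 where b0: "b0 \<in> V" "b0 \<noteq> a0" using pick[OF finV, of "{a0}"] card6 by auto
  have "card {a0,b0} = 2" using b0 by simp
  then obtain c where c: "c \<in> V" "c \<noteq> a0" "c \<noteq> b0"
    using pick[OF finV, of "{a0,b0}"] card6 by auto
  have "card {a0,b0,c} = 3" using b0 c by simp
  then obtain u1 where u1: "u1 \<in> V" "u1 \<noteq> a0" "u1 \<noteq> b0" "u1 \<noteq> c"
    using pick[OF finV, of "{a0,b0,c}"] card6 by auto
  have "card {a0,b0,c,u1} = 4" using b0 c u1 by simp
  then obtain u2 where u2: "u2 \<in> V" "u2 \<noteq> a0" "u2 \<noteq> b0" "u2 \<noteq> c" "u2 \<noteq> u1"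
    using pick[OF finV, of "{a0,b0,c,u1}"] card6 by auto
  obtain k0 x1 where k0: "k0 \<in> Kset" "Cn a0 b0 k0 F x1 \<noteq> 0"
    using complete_zero[OF b0(2)[symmetric], of F xF] xF by blast
  obtain c0 where c0: "c0 \<noteq> 0" "thr (V - {a0,b0}) (\<lambda>x. Cn a0 b0 k0 F x / c0)"
    using IHC[OF a0 b0(1) b0(2)[symmetric] k0(1)] unfolding CR_def by blast
  interpret S: stepctx V F c0 using finV IHC c0(1) by unfold_locales auto
  have g0: "S.good a0 b0 k0" unfolding S.good_def using c0(2) .
  let ?Q = "S.Q a0 b0"
  have charQ: "Cn p q k ?Q x = (if S.good p q k then Cn p q k F x else 0)"
    if pq: "p \<in> {a0,b0,c}" "q \<in> {a0,b0,c}" "p \<noteq> q" and k: "k \<in> Kset" for p q k x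
  proof -
    have "Cn p q k ?Q x = Cn p q k (S.Q u1 u2) x"
      by (rule Cn_ext, intro allI, rule S.Q_eq) (use a0 b0 u1 u2 in auto)
    also have "\<dots> = (if S.good p q k then Cn p q k F x else 0)"
      by (rule S.Cn_Q_disj) (use a0 b0 c u1 u2 pq k in auto)
    finally show ?thesis .
  qed
  let ?g = "\<lambda>x. F x - ?Q x"
  have hyp: "\<forall>k\<in>Kset. (\<forall>x. Cn p q k ?Q x = 0) \<or> (\<forall>x. Cn p q k ?g x = 0)"
    if pq: "p \<in> {a0,b0,c}" "q \<in> {a0,b0,c}" "p \<noteq> q" for p q
    using charQ[OF pq] by (simp add: Cn_diff)
  have Qnz: "\<not> (\<forall>x. ?Q x = 0)"
  proof
    assume "\<forall>x. ?Q x = 0"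
    then have "Cn a0 b0 k0 ?Q x1 = 0" using Cn_ext[of ?Q "\<lambda>x. 0"] Cn_zero by metis
    then show False using charQ[of a0 b0 k0 x1] g0 k0 b0 by simp
  qed
  have "(\<forall>x. ?Q x = 0) \<or> (\<forall>x. ?g x = 0)"
    by (rule three_qubit[of a0 b0 c]) (use b0 c hyp in auto)
  then have FQ: "\<forall>x. F x = ?Q x" using Qnz by auto
  have allgood: "S.good a0 b0 k" if k: "k \<in> Kset" for k
  proof (cases "\<forall>x. Cn a0 b0 k F x = 0")
    case True then show ?thesis unfolding S.good_def by (intro thr_zero') simp
  next
    case False
    then obtain x2 where x2: "Cn a0 b0 k F x2 \<noteq> 0" by blast
    have "Cn a0 b0 k F x2 = Cn a0 b0 k ?Q x2" by (rule Cn_ext) (use FQ in simp)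
    then show ?thesis using charQ[of a0 b0 k x2] k x2 b0 by (auto split: if_splits)
  qed
  have "thr V (\<lambda>x. sum4 (\<lambda>k. Pn a0 b0 k (\<lambda>x. F x / c0) x))"
  proof (rule thr_sum4K)
    fix k assume k: "k \<in> Kset"
    show "thr V (Pn a0 b0 k (\<lambda>x. F x / c0))"
    proof (rule thr_Pn[OF finV a0 b0(1) b0(2)[symmetric] qprop_K[OF k] nk_real_K[OF k]])
      show "thr (V - {a0, b0}) (Cn a0 b0 k (\<lambda>x. F x / c0))"
        using allgood[OF k] unfolding S.good_def by (rule thr_cong) (simp add: Cn_divide)
    qed
  qed
  then have "thr V (\<lambda>x. F x / c0)"
    by (rule thr_cong) (use complete[OF b0(2)[symmetric]] in metis)
  then show ?thesis unfolding CR_def using c0(1) by blast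
qed

primrec mpow :: "mat2 \<Rightarrow> nat \<Rightarrow> mat2" where
  "mpow g 0 = Imat"
| "mpow g (Suc n) = mmul2 (mpow g n) g"

lemma nat_pow_mat: "x [^]\<^bsub>mat_monoid S\<^esub> (n::nat) = mpow x n"
  by (induct n) (simp_all add: mat_monoid_def)

primrec abseq :: "complex \<Rightarrow> nat \<Rightarrow> complex \<times> complex" where
  "abseq t 0 = (0, 1)"
| "abseq t (Suc n) = (t * fst (abseq t n) + snd (abseq t n), - fst (abseq t n))"

lemma mpow_ab: assumes "det2 g = 1"
  shows "mpow g n = (\<lambda>u v. fst (abseq (g False False + g True True) n) * g u v
                        + snd (abseq (g False False + g True True) n) * Imat u v)"
proof (induct n)
  case 0 then show ?case by (simp add: fun_eq_iff)
next
  case (Suc n)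
  let ?t = "g False False + g True True"
  let ?a = "fst (abseq ?t n)" and ?b = "snd (abseq ?t n)"
  have ch: "mmul2 g g = (\<lambda>u v. ?t * g u v - Imat u v)"
    using assms by (auto simp: mmul2_def fun_eq_iff det2_def Imat_def mk2_def algebra_simps)
  have "mpow g (Suc n) = mmul2 (\<lambda>u v. ?a * g u v + ?b * Imat u v) g" using Suc by simp
  also have "\<dots> = (\<lambda>u v. ?a * mmul2 g g u v + ?b * g u v)"
    by (auto simp: mmul2_def fun_eq_iff Imat_def mk2_def algebra_simps)
  also have "\<dots> = (\<lambda>u v. (?t * ?a + ?b) * g u v + (- ?a) * Imat u v)"
    unfolding ch by (simp add: fun_eq_iff algebra_simps)
  finally show ?case by simp
qed

lemma lam_pow: assumes "l^2 = t * l - 1"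
  shows "l ^ n = fst (abseq t n) * l + snd (abseq t n)"
proof (induct n)
  case 0 then show ?case by simp
next
  case (Suc n)
  have "l ^ Suc n = (fst (abseq t n) * l + snd (abseq t n)) * l" using Suc by simp
  also have "\<dots> = fst (abseq t n) * l^2 + snd (abseq t n) * l" by (simp add: power2_eq_square algebra_simps)
  also have "\<dots> = (t * fst (abseq t n) + snd (abseq t n)) * l - fst (abseq t n)"
    unfolding assms by (simp add: algebra_simps)
  finally show ?case by simp
qed

lemma finite_order_trace_real:
  assumes det: "det2 g = 1" and pw: "mpow g n = Imat" and n: "n > 0"
  shows "g False False + g True True \<in> \<real>"
proof -
  let ?t = "g False False + g True True"
  let ?a = "fst (abseq ?t n)" and ?b = "snd (abseq ?t n)"
  have E: "\<And>u v. ?a * g u v + ?b * Imat u v = Imat u v"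
    using mpow_ab[OF det, of n] pw by (metis)
  show ?thesis
  proof (cases "?a = 0")
    case False
    have off: "g False True = 0" "g True False = 0"
      using E[of False True] E[of True False] False by (simp_all add: Imat_def mk2_def)
    have dg: "g False False = g True True"
      using E[of False False] E[of True True] False by (simp add: Imat_def mk2_def) (metis mult_left_cancel add_right_cancel)
    have "g False False ^ 2 = 1" using det off dg by (simp add: det2_def power2_eq_square)
    then have "g False False = 1 \<or> g False False = -1" by (simp add: power2_eq_1_iff)
    then show ?thesis using dg by auto
  next
    case True
    then have b1: "?b = 1" using E[of False False] by (simp add: Imat_def mk2_def)
    define l where "l = (?t + csqrt (?t^2 - 4)) / 2"
    have lq: "l^2 = ?t * l - 1"
      unfolding l_def by (simp add: power2_eq_square field_simps) (simp add: power2_eq_square[symmetric] algebra_simps)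
    have ln: "l ^ n = 1" using lam_pow[OF lq, of n] True b1 by simp
    have nl: "norm l = 1"
    proof -
      have "norm l ^ n = 1 ^ n" using ln by (metis norm_one norm_power power_one)
      then show ?thesis using n power_eq_iff_eq_base[of n "norm l" 1] by simp
    qed
    have l0: "l \<noteq> 0" using nl by auto
    have "l * (?t - l) = 1" using lq by (simp add: power2_eq_square algebra_simps)
    then have "?t - l = 1 / l" using l0 by (simp add: field_simps)
    also have "1 / l = cnj l" using nl by (simp add: divide_conv_cnj complex_norm_square)
    finally have "?t = l + cnj l" by (simp add: algebra_simps)
    then show ?thesis by (simp add: complex_add_cnj)
  qed
qed


lemma Bfrak_det: assumes "B \<in> Bfrak F" shows "det2 B = 1"
proof -
  obtain A s where A: "B = (\<lambda>u v. A u v / s)" "det2 A \<noteq> 0" "s^2 = det2 A"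
    using assms unfolding Bfrak_def by blast
  have s: "s \<noteq> 0" using A by auto
  have "det2 B = det2 A / s^2" unfolding A(1) det2_def using s by (simp add: field_simps power2_eq_square)
  then show ?thesis using A(2,3) by simp
qed

lemma Bfrak_qprop:
  assumes fin: "finite (Bfrak F)" and grp: "group (mat_monoid (Bfrak F))" and K: "Kset \<subseteq> Bfrak F"
    and B: "B \<in> Bfrak F"
  shows "qprop B"
proof -
  let ?G = "mat_monoid (Bfrak F)"
  have tr: "g False False + g True True \<in> \<real>" if g: "g \<in> Bfrak F" for g
  proof -
    have "g [^]\<^bsub>?G\<^esub> order ?G = \<one>\<^bsub>?G\<^esub>"
      using group.pow_order_eq_1[OF grp, of g] g by (simp add: mat_monoid_def)
    then have "mpow g (order ?G) = Imat" unfolding nat_pow_mat by (simp add: mat_monoid_def)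
    moreover have "order ?G = card (Bfrak F)" by (simp add: order_def mat_monoid_def)
    ultimately have "mpow g (card (Bfrak F)) = Imat" by simp
    moreover have "card (Bfrak F) > 0" using fin g by (auto simp: card_gt_0_iff)
    ultimately show ?thesis using finite_order_trace_real Bfrak_det[OF g] by blast
  qed
  have cl: "mmul2 B h \<in> Bfrak F" if "h \<in> Kset" for h
  proof -
    have "monoid ?G" using grp by (simp add: group_def)
    then show ?thesis using monoid.m_closed[of ?G B h] B K that by (auto simp: mat_monoid_def)
  qed
  have t1: "B False False + B True True \<in> \<real>" using tr[OF B] .
  have t2: "\<i> * B False False - \<i> * B True True \<in> \<real>"
    using tr[OF cl[of Xmat]] by (simp add: mmul2_def K_vals Kset_def mult.commute)
  have t3: "B True False - B False True \<in> \<real>"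
    using tr[OF cl[of Ymat]] by (simp add: mmul2_def K_vals Kset_def)
  have t4: "\<i> * B False True + \<i> * B True False \<in> \<real>"
    using tr[OF cl[of Zmat]] by (simp add: mmul2_def K_vals Kset_def mult.commute)
  show ?thesis unfolding qprop_def
    using t1 t2 t3 t4 by (auto simp: complex_eq_iff complex_is_Real_iff)
qed

definition relabel :: "(nat + nat \<Rightarrow> nat + nat) \<Rightarrow> gadget \<Rightarrow> gadget" where
  "relabel \<rho> G = map (\<lambda>(f, es). (f, map \<rho> es)) G"

definition evalG :: "gadget \<Rightarrow> (nat + nat \<Rightarrow> bool) \<Rightarrow> complex" where
  "evalG G \<alpha> = prod_list (map (\<lambda>(f, es). snd f (map \<alpha> es)) G)"

definition Sg :: "gadget \<Rightarrow> (nat \<Rightarrow> bool) set" where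
  "Sg G = {\<sigma>. \<forall>e. e \<notin> internal_edges G \<longrightarrow> \<sigma> e = False}"

lemma gf_eq: "gadget_fun G x = (\<Sum>\<sigma>\<in>Sg G. evalG G (case_sum (\<lambda>i. x ! i) \<sigma>))"
  unfolding gadget_fun_def Sg_def evalG_def by (rule sum.cong) (auto intro!: arg_cong[where f=prod_list] split: sum.splits)

lemma evalG_cong: "(\<And>l. l \<in> set (all_labels G) \<Longrightarrow> \<alpha> l = \<beta> l) \<Longrightarrow> evalG G \<alpha> = evalG G \<beta>"
  unfolding evalG_def all_labels_def
  by (induct G) (auto intro!: arg_cong2[where f="(*)"] arg_cong[where f="snd _"])

lemma evalG_relabel: "evalG (relabel \<rho> G) \<alpha> = evalG G (\<alpha> \<circ> \<rho>)"
  unfolding evalG_def relabel_def by (induct G) (auto simp: comp_def)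

lemma evalG_append: "evalG (G1 @ G2) \<alpha> = evalG G1 \<alpha> * evalG G2 \<alpha>"
  unfolding evalG_def by simp

lemma labels_relabel: "all_labels (relabel \<rho> G) = map \<rho> (all_labels G)"
  unfolding all_labels_def relabel_def by (induct G) auto

lemma labels_append: "all_labels (G1 @ G2) = all_labels G1 @ all_labels G2"
  unfolding all_labels_def by simp

lemma count_map_inj: "inj \<rho> \<Longrightarrow> count_list (map \<rho> L) (\<rho> y) = count_list L y"
  by (induct L) (auto dest: injD)

lemma count_map_none: "(\<And>y. \<rho> y \<noteq> z) \<Longrightarrow> count_list (map \<rho> L) z = 0"
  by (induct L) auto

lemma count_pos_iff: "count_list L y > 0 \<longleftrightarrow> y \<in> set L"
  by (induct L) auto

lemma wf_labels_lt: assumes "wf_gadget F n G" "Inl l \<in> set (all_labels G)" shows "l < n"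
proof (rule ccontr)
  assume "\<not> l < n"
  then have "count_list (all_labels G) (Inl l) = 0" using assms(1) unfolding wf_gadget_def by simp
  then show False using assms(2) count_pos_iff[of "all_labels G" "Inl l"] by simp
qed

lemma wf_label_in: assumes "wf_gadget F n G" "l < n" shows "Inl l \<in> set (all_labels G)"
proof -
  have "count_list (all_labels G) (Inl l) = 1" using assms unfolding wf_gadget_def by blast
  then show ?thesis using count_pos_iff[of "all_labels G" "Inl l"] by simp
qed

lemma wf_vertices: "wf_gadget F n G \<Longrightarrow> (f, es) \<in> set G \<Longrightarrow> f \<in> F \<and> length es = fst f"
  unfolding wf_gadget_def by blast

lemma wf_relabel_vertices: "wf_gadget F n G \<Longrightarrow> (f, es) \<in> set (relabel \<rho> G) \<Longrightarrow> f \<in> F \<and> length es = fst f"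
  unfolding relabel_def using wf_vertices by fastforce

definition rho_perm :: "nat \<Rightarrow> (nat \<Rightarrow> nat) \<Rightarrow> nat + nat \<Rightarrow> nat + nat" where
  "rho_perm n r l = (case l of Inl i \<Rightarrow> if i < n then Inl (r i) else Inl i | Inr e \<Rightarrow> Inr e)"

lemma rho_perm_inj: assumes "bij_betw r {0..<n} {0..<n}" shows "inj (rho_perm n r)"
proof (rule injI)
  fix l1 l2 assume e: "rho_perm n r l1 = rho_perm n r l2"
  have inj: "inj_on r {0..<n}" and img: "\<And>i. i < n \<Longrightarrow> r i < n" using assms unfolding bij_betw_def by auto
  show "l1 = l2"
  proof (cases l1; cases l2)
    fix i j assume l: "l1 = Inl i" "l2 = Inl j"
    have "i = j"
    proof (cases "i < n"; cases "j < n")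
      assume "i < n" "j < n" then show ?thesis using e l inj by (auto simp: rho_perm_def dest: inj_onD)
    next
      assume "i < n" "\<not> j < n" then show ?thesis using e l img[of i] by (auto simp: rho_perm_def)
    next
      assume "\<not> i < n" "j < n" then show ?thesis using e l img[of j] by (auto simp: rho_perm_def)
    next
      assume "\<not> i < n" "\<not> j < n" then show ?thesis using e l by (auto simp: rho_perm_def)
    qed
    then show ?thesis using l by simp
  qed (use e in \<open>auto simp: rho_perm_def split: if_splits\<close>)
qed

lemma relabel_perm:
  assumes wf: "wf_gadget F n G" and r: "bij_betw r {0..<n} {0..<n}"
  shows "wf_gadget F n (relabel (rho_perm n r) G)"
    and "gadget_fun (relabel (rho_perm n r) G) ys = gadget_fun G (map (\<lambda>l. ys ! r l) [0..<n])"
proof -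
  let ?\<rho> = "rho_perm n r"
  let ?G' = "relabel ?\<rho> G"
  have inj: "inj ?\<rho>" by (rule rho_perm_inj[OF r])
  have L: "all_labels ?G' = map ?\<rho> (all_labels G)" by (rule labels_relabel)
  have cInr: "count_list (all_labels ?G') (Inr e) = count_list (all_labels G) (Inr e)" for e
    using count_map_inj[OF inj, of "all_labels G" "Inr e"] L by (simp add: rho_perm_def)
  have IE: "internal_edges ?G' = internal_edges G"
    unfolding internal_edges_def using cInr count_pos_iff by (metis)
  show "wf_gadget F n ?G'"
    unfolding wf_gadget_def
  proof (intro conjI allI impI)
    show "\<forall>(f, es)\<in>set ?G'. f \<in> F \<and> length es = fst f" using wf_relabel_vertices[OF wf] by blast
  next
    fix i assume i: "i < n"
    obtain l where l: "l < n" "r l = i" using r i unfolding bij_betw_def by (metis atLeastLessThan_iff imageE zero_le)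
    have "count_list (all_labels ?G') (Inl i) = count_list (all_labels G) (Inl l)"
      using count_map_inj[OF inj, of "all_labels G" "Inl l"] L l by (simp add: rho_perm_def)
    then show "count_list (all_labels ?G') (Inl i) = 1" using wf l unfolding wf_gadget_def by simp
  next
    fix i assume i: "n \<le> i"
    have "count_list (all_labels ?G') (Inl i) = count_list (all_labels G) (Inl i)"
      using count_map_inj[OF inj, of "all_labels G" "Inl i"] L i by (simp add: rho_perm_def)
    then show "count_list (all_labels ?G') (Inl i) = 0" using wf i unfolding wf_gadget_def by simp
  next
    fix e show "count_list (all_labels ?G') (Inr e) = 0 \<or> count_list (all_labels ?G') (Inr e) = 2"
      using wf cInr unfolding wf_gadget_def by simp
  qed
  show "gadget_fun ?G' ys = gadget_fun G (map (\<lambda>l. ys ! r l) [0..<n])"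
    unfolding gf_eq Sg_def IE
  proof (rule sum.cong[OF refl])
    fix \<sigma>
    show "evalG ?G' (case_sum (\<lambda>i. ys ! i) \<sigma>) = evalG G (case_sum (\<lambda>i. map (\<lambda>l. ys ! r l) [0..<n] ! i) \<sigma>)"
      unfolding evalG_relabel
    proof (rule evalG_cong)
      fix l assume lin: "l \<in> set (all_labels G)"
      show "(case_sum (\<lambda>i. ys ! i) \<sigma> \<circ> ?\<rho>) l = case_sum (\<lambda>i. map (\<lambda>l. ys ! r l) [0..<n] ! i) \<sigma> l"
      proof (cases l)
        case (Inl i)
        then have "i < n" using wf_labels_lt[OF wf] lin by blast
        then show ?thesis using Inl by (simp add: rho_perm_def)
      qed (simp add: rho_perm_def)
    qed
  qed
qed


definition rho1 :: "nat \<Rightarrow> nat + nat \<Rightarrow> nat + nat" where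
  "rho1 m l = (case l of Inl i \<Rightarrow> if i < m then Inl i else if i = m then Inr 0 else if i = Suc m then Inr 1 else Inl i
                | Inr e \<Rightarrow> Inr (2*e+2))"
definition rho2 :: "nat \<Rightarrow> nat + nat \<Rightarrow> nat + nat" where
  "rho2 m l = (case l of Inl i \<Rightarrow> if i = 0 then Inr 0 else if i = 1 then Inr 1 else Inl (i+m)
                | Inr e \<Rightarrow> Inr (2*e+3))"

lemma rho1_inj: "inj (rho1 m)"
  by (rule injI) (auto simp: rho1_def split: sum.splits if_splits)
lemma rho2_inj: "inj (rho2 m)"
  by (rule injI) (auto simp: rho2_def split: sum.splits if_splits)

lemma rho1_Inr: "rho1 m l = Inr e \<longleftrightarrow> (l = Inl m \<and> e = 0) \<or> (l = Inl (Suc m) \<and> e = 1) \<or> (\<exists>e'. l = Inr e' \<and> e = 2*e'+2)"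
  by (auto simp: rho1_def split: sum.splits if_splits)
lemma rho2_Inr: "rho2 m l = Inr e \<longleftrightarrow> (l = Inl 0 \<and> e = 0) \<or> (l = Inl 1 \<and> e = 1) \<or> (\<exists>e'. l = Inr e' \<and> e = 2*e'+3)"
  by (auto simp: rho2_def split: sum.splits if_splits)

lemma e_cases: "(e::nat) = 0 \<or> e = 1 \<or> (\<exists>e'. e = 2*e'+2) \<or> (\<exists>e'. e = 2*e'+3)"
  by presburger

lemma glue:
  assumes wf: "wf_gadget F (m+2) G" and wfA: "wf_gadget F 2 GA"
  shows "\<exists>G'. wf_gadget F m G' \<and> (\<forall>ys. length ys = m \<longrightarrow>
           gadget_fun G' ys = (\<Sum>u\<in>UNIV. \<Sum>v\<in>UNIV. gadget_fun GA [u,v] * gadget_fun G (ys @ [u,v])))"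
proof -
  let ?G' = "relabel (rho1 m) G @ relabel (rho2 m) GA"
  let ?L1 = "all_labels G" and ?L2 = "all_labels GA"
  have L: "all_labels ?G' = map (rho1 m) ?L1 @ map (rho2 m) ?L2"
    by (simp add: labels_append labels_relabel)
  have c1: "count_list ?L1 (Inl i) = (if i < m+2 then 1 else 0)" for i
    using wf unfolding wf_gadget_def by (auto simp: not_less)
  have c2: "count_list ?L2 (Inl i) = (if i < 2 then 1 else 0)" for i
    using wfA unfolding wf_gadget_def by (auto simp: not_less)
  have c1r: "count_list ?L1 (Inr e) = 0 \<or> count_list ?L1 (Inr e) = 2" for e
    using wf unfolding wf_gadget_def by blast
  have c2r: "count_list ?L2 (Inr e) = 0 \<or> count_list ?L2 (Inr e) = 2" for e
    using wfA unfolding wf_gadget_def by blast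
  have i1: "Inl m \<in> set ?L1" "Inl (Suc m) \<in> set ?L1" using wf_label_in[OF wf] by auto
  have i2: "Inl 0 \<in> set ?L2" "Inl 1 \<in> set ?L2" using wf_label_in[OF wfA] by auto
  have IE: "e \<in> internal_edges ?G' \<longleftrightarrow> e = 0 \<or> e = 1 \<or> (\<exists>e'\<in>internal_edges G. e = 2*e'+2)
             \<or> (\<exists>e'\<in>internal_edges GA. e = 2*e'+3)" for e
  proof -
    have "e \<in> internal_edges ?G' \<longleftrightarrow> (\<exists>l\<in>set ?L1. rho1 m l = Inr e) \<or> (\<exists>l\<in>set ?L2. rho2 m l = Inr e)"
      unfolding internal_edges_def L by (auto simp: image_iff) (metis)+
    also have "\<dots> \<longleftrightarrow> e = 0 \<or> e = 1 \<or> (\<exists>e'\<in>internal_edges G. e = 2*e'+2) \<or> (\<exists>e'\<in>internal_edges GA. e = 2*e'+3)"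
      unfolding rho1_Inr rho2_Inr internal_edges_def using i1 i2 by auto
    finally show ?thesis .
  qed
  have wf': "wf_gadget F m ?G'"
    unfolding wf_gadget_def
  proof (intro conjI allI impI)
    show "\<forall>(f, es)\<in>set ?G'. f \<in> F \<and> length es = fst f"
      using wf_relabel_vertices[OF wf] wf_relabel_vertices[OF wfA] by auto
  next
    fix i assume i: "i < m"
    have "count_list (map (rho1 m) ?L1) (Inl i) = count_list ?L1 (Inl i)"
      using count_map_inj[OF rho1_inj[of m], where L="?L1" and y="Inl i"] i by (simp add: rho1_def)
    moreover have "count_list (map (rho2 m) ?L2) (Inl i) = 0"
      by (rule count_map_none) (use i in \<open>auto simp: rho2_def split: sum.splits\<close>)
    ultimately show "count_list (all_labels ?G') (Inl i) = 1" unfolding L using c1 i by simp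
  next
    fix i assume i: "m \<le> i"
    have "count_list (map (rho1 m) ?L1) (Inl i) = 0"
    proof (cases "i \<ge> m+2")
      case True
      then show ?thesis using count_map_inj[OF rho1_inj[of m], where L="?L1" and y="Inl i"] c1[of i] by (simp add: rho1_def)
    next
      case False
      show ?thesis by (rule count_map_none) (use i False in \<open>auto simp: rho1_def split: sum.splits\<close>)
    qed
    moreover have "count_list (map (rho2 m) ?L2) (Inl i) = 0"
    proof (cases "i \<ge> m+2")
      case True
      then have "rho2 m (Inl (i - m)) = Inl i" by (simp add: rho2_def)
      then show ?thesis using count_map_inj[OF rho2_inj[of m], where L="?L2" and y="Inl (i-m)"] c2[of "i-m"] True by simp
    next
      case False
      show ?thesis by (rule count_map_none) (use i False in \<open>auto simp: rho2_def split: sum.splits\<close>)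
    qed
    ultimately show "count_list (all_labels ?G') (Inl i) = 0" unfolding L by simp
  next
    fix e :: nat
    have "e = 0 \<or> e = 1 \<or> (\<exists>e'. e = 2*e'+2) \<or> (\<exists>e'. e = 2*e'+3)" by (rule e_cases)
    then show "count_list (all_labels ?G') (Inr e) = 0 \<or> count_list (all_labels ?G') (Inr e) = 2"
    proof (elim disjE exE)
      assume e: "e = 0"
      have "count_list (map (rho1 m) ?L1) (Inr 0) = 1"
        using count_map_inj[OF rho1_inj[of m], where L="?L1" and y="Inl m"] c1[of m] by (simp add: rho1_def)
      moreover have "count_list (map (rho2 m) ?L2) (Inr 0) = 1"
        using count_map_inj[OF rho2_inj[of m], where L="?L2" and y="Inl 0"] c2[of 0] by (simp add: rho2_def)
      ultimately show ?thesis unfolding L e by simp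
    next
      assume e: "e = 1"
      have "count_list (map (rho1 m) ?L1) (Inr 1) = 1"
        using count_map_inj[OF rho1_inj[of m], where L="?L1" and y="Inl (Suc m)"] c1[of "Suc m"] by (simp add: rho1_def)
      moreover have "count_list (map (rho2 m) ?L2) (Inr 1) = 1"
        using count_map_inj[OF rho2_inj[of m], where L="?L2" and y="Inl 1"] c2[of 1] by (simp add: rho2_def)
      ultimately show ?thesis unfolding L e by simp
    next
      fix e' assume e: "e = 2*e'+2"
      have "count_list (map (rho1 m) ?L1) (Inr e) = count_list ?L1 (Inr e')"
        using count_map_inj[OF rho1_inj[of m], where L="?L1" and y="Inr e'"] e by (simp add: rho1_def)
      moreover have "count_list (map (rho2 m) ?L2) (Inr e) = 0"
        by (rule count_map_none) (use e in \<open>auto simp: rho2_def split: sum.splits if_splits; presburger\<close>)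
      ultimately show ?thesis unfolding L using c1r[of e'] by auto
    next
      fix e' assume e: "e = 2*e'+3"
      have "count_list (map (rho2 m) ?L2) (Inr e) = count_list ?L2 (Inr e')"
        using count_map_inj[OF rho2_inj[of m], where L="?L2" and y="Inr e'"] e by (simp add: rho2_def)
      moreover have "count_list (map (rho1 m) ?L1) (Inr e) = 0"
        by (rule count_map_none) (use e in \<open>auto simp: rho1_def split: sum.splits if_splits; presburger\<close>)
      ultimately show ?thesis unfolding L using c2r[of e'] by auto
    qed
  qed
  have fun': "gadget_fun ?G' ys = (\<Sum>u\<in>UNIV. \<Sum>v\<in>UNIV. gadget_fun GA [u,v] * gadget_fun G (ys @ [u,v]))"
    if ys: "length ys = m" for ys
  proof -
    define T where "T = (\<lambda>(u::bool, v::bool, s1::nat\<Rightarrow>bool, s2::nat\<Rightarrow>bool).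
        evalG G (case_sum (\<lambda>i. (ys @ [u,v]) ! i) s1) * evalG GA (case_sum (\<lambda>i. [u,v] ! i) s2))"
    define \<phi> where "\<phi> = (\<lambda>\<sigma>::nat\<Rightarrow>bool. (\<sigma> 0, \<sigma> 1, \<lambda>e. \<sigma> (2*e+2), \<lambda>e. \<sigma> (2*e+3)))"
    define \<psi> where "\<psi> = (\<lambda>(u::bool, v::bool, s1::nat\<Rightarrow>bool, s2::nat\<Rightarrow>bool). \<lambda>e::nat.
        if e = 0 then u else if e = 1 then v else if even e then s1 ((e-2) div 2) else s2 ((e-3) div 2))"
    have step1: "evalG ?G' (case_sum (\<lambda>i. ys ! i) \<sigma>) = T (\<phi> \<sigma>)" for \<sigma>
    proof -
      have a: "evalG G (case_sum (\<lambda>i. ys ! i) \<sigma> \<circ> rho1 m) = evalG G (case_sum (\<lambda>i. (ys @ [\<sigma> 0, \<sigma> 1]) ! i) (\<lambda>e. \<sigma> (2*e+2)))"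
      proof (rule evalG_cong)
        fix l assume lin: "l \<in> set ?L1"
        show "(case_sum (\<lambda>i. ys ! i) \<sigma> \<circ> rho1 m) l = case_sum (\<lambda>i. (ys @ [\<sigma> 0, \<sigma> 1]) ! i) (\<lambda>e. \<sigma> (2*e+2)) l"
        proof (cases l)
          case (Inl i)
          then have "i < m + 2" using wf_labels_lt[OF wf] lin by blast
          then show ?thesis using Inl ys by (auto simp: rho1_def nth_append)
        qed (simp add: rho1_def)
      qed
      have b: "evalG GA (case_sum (\<lambda>i. ys ! i) \<sigma> \<circ> rho2 m) = evalG GA (case_sum (\<lambda>i. [\<sigma> 0, \<sigma> 1] ! i) (\<lambda>e. \<sigma> (2*e+3)))"
      proof (rule evalG_cong)
        fix l assume lin: "l \<in> set ?L2"
        show "(case_sum (\<lambda>i. ys ! i) \<sigma> \<circ> rho2 m) l = case_sum (\<lambda>i. [\<sigma> 0, \<sigma> 1] ! i) (\<lambda>e. \<sigma> (2*e+3)) l"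
        proof (cases l)
          case (Inl i)
          then have "i < 2" using wf_labels_lt[OF wfA] lin by blast
          then show ?thesis using Inl by (auto simp: rho2_def less_2_cases_iff)
        qed (simp add: rho2_def)
      qed
      show ?thesis unfolding evalG_append evalG_relabel a b T_def \<phi>_def by simp
    qed
    have "gadget_fun ?G' ys = (\<Sum>\<sigma>\<in>Sg ?G'. T (\<phi> \<sigma>))" unfolding gf_eq step1 ..
    also have "\<dots> = (\<Sum>z\<in>UNIV \<times> UNIV \<times> Sg G \<times> Sg GA. T z)"
    proof (rule sum.reindex_bij_witness[where i=\<psi> and j=\<phi>])
      fix \<sigma> assume "\<sigma> \<in> Sg ?G'"
      show "\<psi> (\<phi> \<sigma>) = \<sigma>" unfolding \<psi>_def \<phi>_def
      proof (rule ext)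
        fix e show "(case (\<sigma> 0, \<sigma> 1, \<lambda>e. \<sigma> (2*e+2), \<lambda>e. \<sigma> (2*e+3)) of (u, v, s1, s2) \<Rightarrow> \<lambda>e.
          if e = 0 then u else if e = 1 then v else if even e then s1 ((e-2) div 2) else s2 ((e-3) div 2)) e = \<sigma> e"
          using e_cases[of e] by (auto simp: algebra_simps)
      qed
    next
      fix \<sigma> assume s: "\<sigma> \<in> Sg ?G'"
      have n1: "2*e+2 \<notin> internal_edges ?G'" if "e \<notin> internal_edges G" for e
        unfolding IE using that by auto presburger+
      have n2: "2*e+3 \<notin> internal_edges ?G'" if "e \<notin> internal_edges GA" for e
        unfolding IE using that by auto presburger+
      show "\<phi> \<sigma> \<in> UNIV \<times> UNIV \<times> Sg G \<times> Sg GA"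
        using s n1 n2 unfolding \<phi>_def Sg_def by auto
    next
      fix z assume "z \<in> (UNIV::bool set) \<times> (UNIV::bool set) \<times> Sg G \<times> Sg GA"
      show "\<phi> (\<psi> z) = z" unfolding \<psi>_def \<phi>_def by (auto split: prod.splits)
    next
      fix z assume z: "z \<in> (UNIV::bool set) \<times> (UNIV::bool set) \<times> Sg G \<times> Sg GA"
      obtain u v s1 s2 where zz: "z = (u, v, s1, s2)" "s1 \<in> Sg G" "s2 \<in> Sg GA" using z by auto
      show "\<psi> z \<in> Sg ?G'"
        unfolding Sg_def
      proof (intro CollectI allI impI)
        fix e assume e: "e \<notin> internal_edges ?G'"
        then have e01: "e \<noteq> 0" "e \<noteq> 1" unfolding IE by auto
        show "\<psi> z e = False"
        proof (cases "even e")
          case True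
          have "e = 2*((e-2) div 2)+2" using True e01 by presburger
          then obtain e' where e': "e = 2*e'+2" by blast
          then have "e' \<notin> internal_edges G" using e unfolding IE by auto
          then show ?thesis using zz e' e01 unfolding \<psi>_def Sg_def by auto
        next
          case False
          have "e = 2*((e-3) div 2)+3" using False e01 by presburger
          then obtain e' where e': "e = 2*e'+3" by blast
          then have "e' \<notin> internal_edges GA" using e unfolding IE by auto
          then show ?thesis using zz e' e01 False unfolding \<psi>_def Sg_def by auto
        qed
      qed
    next
      fix \<sigma> show "T (\<phi> \<sigma>) = T (\<phi> \<sigma>)" ..
    qed
    also have "\<dots> = (\<Sum>u\<in>UNIV. \<Sum>v\<in>UNIV. (\<Sum>s2\<in>Sg GA. evalG GA (case_sum (\<lambda>i. [u,v] ! i) s2))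
                      * (\<Sum>s1\<in>Sg G. evalG G (case_sum (\<lambda>i. (ys @ [u,v]) ! i) s1)))"
      unfolding T_def
      by (simp add: sum.cartesian_product[symmetric] sum_product sum.swap[of _ "Sg G"] mult.commute)
    also have "\<dots> = (\<Sum>u\<in>UNIV. \<Sum>v\<in>UNIV. gadget_fun GA [u,v] * gadget_fun G (ys @ [u,v]))"
      unfolding gf_eq ..
    finally show ?thesis .
  qed
  show ?thesis using wf' fun' by blast
qed

definition realizableV :: "sig set \<Rightarrow> nat set \<Rightarrow> ((nat \<Rightarrow> bool) \<Rightarrow> complex) \<Rightarrow> bool" where
  "realizableV F V f \<longleftrightarrow> (\<exists>n G h. wf_gadget F n G \<and> bij_betw h {0..<n} V \<and>
      (\<forall>x. f x = gadget_fun G (map (\<lambda>i. x (h i)) [0..<n])))"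

lemma CR_cong: "CR V f \<Longrightarrow> (\<forall>x. f x = g x) \<Longrightarrow> CR V g"
  unfolding CR_def by (auto intro: thr_cong)

lemma cnt_bij: fixes n :: nat assumes "bij_betw h {0..<n} V" shows "cnt V x = (\<Sum>l<n. of_bool (x (h l)))"
proof -
  have e: "{..<n} = {0..<n}" by auto
  show ?thesis unfolding cnt_def e by (rule sym[OF sum.reindex_bij_betw[OF assms, of "\<lambda>i. of_bool (x i)"]])
qed

lemma RV_contract:
  assumes RV: "realizableV F V f" and ab: "a \<in> V" "b \<in> V" "a \<noteq> b" and A: "realizable_bin F A"
  shows "realizableV F (V - {a,b}) (Cn a b A f)"
proof -
  obtain n G h where G: "wf_gadget F n G" and h: "bij_betw h {0..<n} V"
    and f: "\<And>x. f x = gadget_fun G (map (\<lambda>i. x (h i)) [0..<n])"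
    using RV unfolding realizableV_def by blast
  have finV: "finite V" using h bij_betw_finite by blast
  have cardV: "card V = n" using h bij_betw_same_card by fastforce
  define m where "m = n - 2"
  have cardV2: "card (V - {a,b}) = m" using cardV ab finV unfolding m_def by (simp add: card_Diff_subset)
  have "card {a,b} \<le> card V" using ab finV by (intro card_mono) auto
  then have nm: "n = m + 2" using ab cardV unfolding m_def by simp
  obtain g where g: "bij_betw g {0..<m} (V - {a,b})"
    using ex_bij_betw_nat_finite[of "V - {a,b}"] finV cardV2 by auto
  define h' where "h' = (\<lambda>l. if l < m then g l else if l = m then a else b)"
  have h': "bij_betw h' {0..<n} V"
  proof -
    have gi: "inj_on g {0..<m}" "g ` {0..<m} = V - {a,b}" using g unfolding bij_betw_def by auto
    have gx: "g l \<in> V - {a,b}" if "l < m" for l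
    proof -
      have "g l \<in> g ` {0..<m}" using that by simp
      then show ?thesis unfolding gi(2) .
    qed
    have "inj_on h' {0..<n}"
    proof (rule inj_onI)
      fix x y assume xy: "x \<in> {0..<n}" "y \<in> {0..<n}" "h' x = h' y"
      show "x = y"
        using xy nm gx[of x] gx[of y] ab gi(1) unfolding h'_def
        by (auto split: if_splits dest: inj_onD)
    qed
    moreover have "h' ` {0..<n} = V"
    proof
      show "h' ` {0..<n} \<subseteq> V" using gx ab nm unfolding h'_def by auto
    next
      show "V \<subseteq> h' ` {0..<n}"
      proof
        fix v assume v: "v \<in> V"
        show "v \<in> h' ` {0..<n}"
        proof (cases "v = a \<or> v = b")
          case True
          then show ?thesis using nm ab unfolding h'_def
            by (auto simp: image_iff intro: bexI[of _ m] bexI[of _ "Suc m"])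
        next
          case False
          have "v \<in> g ` {0..<m}" using gi(2) v False by auto
          then obtain l where "l < m" "g l = v" by auto
          then show ?thesis using nm unfolding h'_def by (auto simp: image_iff intro!: bexI[of _ l])
        qed
      qed
    qed
    ultimately show ?thesis unfolding bij_betw_def by blast
  qed
  define r where "r = (\<lambda>l. the_inv_into {0..<n} h' (h l))"
  have r: "bij_betw r {0..<n} {0..<n}"
    unfolding r_def using bij_betw_trans[OF h bij_betw_the_inv_into[OF h']] by (simp add: comp_def)
  have h'r: "h' (r l) = h l" if "l < n" for l
  proof -
    have "h l \<in> V" using h that unfolding bij_betw_def by auto
    then show ?thesis unfolding r_def by (simp add: f_the_inv_into_f_bij_betw[OF h'])
  qed
  let ?G1 = "relabel (rho_perm n r) G"
  have G1: "wf_gadget F n ?G1" by (rule relabel_perm(1)[OF G r])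
  have rn: "r l < n" if "l < n" for l using r that unfolding bij_betw_def by auto
  have f1: "f x = gadget_fun ?G1 (map (\<lambda>i. x (h' i)) [0..<n])" for x
  proof -
    have "map (\<lambda>l. map (\<lambda>i. x (h' i)) [0..<n] ! r l) [0..<n] = map (\<lambda>i. x (h i)) [0..<n]"
    proof (rule map_cong[OF refl])
      fix l assume "l \<in> set [0..<n]"
      then have l: "l < n" by simp
      show "map (\<lambda>i. x (h' i)) [0..<n] ! r l = x (h l)" using rn[OF l] h'r[OF l] by simp
    qed
    note mapeq = this
    show ?thesis unfolding f relabel_perm(2)[OF G r] mapeq by (rule refl)
  qed
  obtain GA where GA: "wf_gadget F 2 GA" and A': "\<And>xs. length xs = 2 \<Longrightarrow> A (xs!0) (xs!1) = gadget_fun GA xs"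
    using A unfolding realizable_bin_def realizable_def by blast
  obtain G' where G': "wf_gadget F m G'"
    and gl: "\<And>ys. length ys = m \<Longrightarrow> gadget_fun G' ys = (\<Sum>u\<in>UNIV. \<Sum>v\<in>UNIV. gadget_fun GA [u,v] * gadget_fun ?G1 (ys @ [u,v]))"
    using glue[OF G1[unfolded nm] GA] nm by auto
  have key: "Cn a b A f x = gadget_fun G' (map (\<lambda>i. x (g i)) [0..<m])" for x
  proof -
    have mp: "map (\<lambda>i. (x(a:=u,b:=v)) (h' i)) [0..<n] = map (\<lambda>i. x (g i)) [0..<m] @ [u,v]" for u v
    proof -
      have gV: "i < m \<Longrightarrow> g i \<noteq> a \<and> g i \<noteq> b" for i using bij_betwE[OF g] by fastforce
      have "[0..<m+2] = [0..<m] @ [m, Suc m]" by simp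
      then have "[0..<n] = [0..<m] @ [m, Suc m]" using nm by simp
      then show ?thesis using gV ab by (simp add: h'_def)
    qed
    have AA: "A u v = gadget_fun GA [u,v]" for u v using A'[of "[u,v]"] by simp
    show ?thesis
      unfolding gl[of "map (\<lambda>i. x (g i)) [0..<m]", simplified] Cn_def f1 mp AA[symmetric]
      by (simp add: UNIV_bool algebra_simps)
  qed
  show ?thesis unfolding realizableV_def using G' g key by blast
qed


lemma len2: "length xs = 2 \<Longrightarrow> xs = [xs!0, xs!1]"
  by (cases xs; cases "tl xs") auto

lemma base0:
  assumes RV: "realizableV F V f" and c: "card V = 0" and finV: "finite V"
  shows "CR V f"
proof -
  obtain n G h where G: "wf_gadget F n G" and h: "bij_betw h {0..<n} V"
    and f: "\<And>x. f x = gadget_fun G (map (\<lambda>i. x (h i)) [0..<n])"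
    using RV unfolding realizableV_def by blast
  have V0: "V = {}" using c finV by simp
  have n0: "n = 0" using h V0 bij_betw_same_card by fastforce
  have fc: "f x = gadget_fun G []" for x using f n0 by simp
  show ?thesis
  proof (cases "gadget_fun G [] = 0")
    case True then show ?thesis using fc by (intro CR_zero) simp
  next
    case False
    have "thr V (\<lambda>x. f x / gadget_fun G [])"
      unfolding thr_def V0 using False by (simp add: fc cnt_def flipV_def)
    then show ?thesis unfolding CR_def using False by blast
  qed
qed

context
  fixes F :: "sig set"
  assumes fin: "finite (Bfrak F)" and grp: "group (mat_monoid (Bfrak F))" and K: "Kset \<subseteq> Bfrak F"
    and bin: "\<forall>A. realizable_bin F A \<longrightarrow> (\<exists>c::complex. \<exists>B \<in> Bfrak F. A = (\<lambda>u v. c * B u v))"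
    and ar4: "\<forall>f. realizable F 4 f \<longrightarrow>
       (\<exists>\<mu>::complex. \<exists>A \<in> Bfrak F. \<exists>B \<in> Bfrak F. \<exists>\<sigma>. \<sigma> permutes {0..<4} \<and>
          (\<forall>x. length x = 4 \<longrightarrow>
             f x = \<mu> * A (x ! \<sigma> 0) (x ! \<sigma> 1) * B (x ! \<sigma> 2) (x ! \<sigma> 3)))"
begin

lemma base2:
  assumes RV: "realizableV F V f" and c: "card V = 2"
  shows "CR V f"
proof -
  obtain n G h where G: "wf_gadget F n G" and h: "bij_betw h {0..<n} V"
    and f: "\<And>x. f x = gadget_fun G (map (\<lambda>i. x (h i)) [0..<n])"
    using RV unfolding realizableV_def by blast
  have n2: "n = 2" using h c bij_betw_same_card by fastforce
  define A where "A = (\<lambda>u v. gadget_fun G [u,v])"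
  have "realizable_bin F A"
    unfolding realizable_bin_def realizable_def A_def
  proof (intro exI[of _ G] conjI allI impI)
    show "wf_gadget F 2 G" using G n2 by simp
  next
    fix xs :: "bool list" assume l: "length xs = 2"
    have e: "[xs!0, xs!1] = xs" by (metis len2[OF l])
    show "gadget_fun G [xs!0, xs!1] = gadget_fun G xs" unfolding e ..
  qed
  then obtain c B where B: "B \<in> Bfrak F" and AB: "A = (\<lambda>u v. c * B u v)" using bin by blast
  have qB: "qprop B" by (rule Bfrak_qprop[OF fin grp K B])
  have fx: "f x = c * B (x (h 0)) (x (h 1))" for x
  proof -
    have "map (\<lambda>i. x (h i)) [0..<n] = [x (h 0), x (h 1)]" using n2 by (simp add: upt_rec)
    then have "f x = A (x (h 0)) (x (h 1))" using f[of x] unfolding A_def by simp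
    then show ?thesis using AB by simp
  qed
  have hV: "h 0 \<in> V" "h 1 \<in> V" using h n2 unfolding bij_betw_def by auto
  show ?thesis
  proof (cases "c = 0")
    case True then show ?thesis using fx by (intro CR_zero) simp
  next
    case False
    have "thr V (\<lambda>x. f x / c)"
      unfolding thr_def
    proof
      fix x
      have fl: "flipV V x (h 0) = (\<not> x (h 0))" "flipV V x (h 1) = (\<not> x (h 1))" using hV by (auto simp: flipV_def)
      have cn: "cnt V x = of_bool (x (h 0)) + of_bool (x (h 1))"
        using cnt_bij[OF h, of x] n2 by (simp add: numeral_2_eq_2)
      show "f (flipV V x) / c = (-1) ^ cnt V x * cnj (f x / c)"
        unfolding fx fl cn using False qprop_flip[OF qB, of "x (h 0)" "x (h 1)"] by simp
    qed
    then show ?thesis unfolding CR_def using False by blast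
  qed
qed

lemma base4:
  assumes RV: "realizableV F V f" and c: "card V = 4"
  shows "CR V f"
proof -
  obtain n G h where G: "wf_gadget F n G" and h: "bij_betw h {0..<n} V"
    and f: "\<And>x. f x = gadget_fun G (map (\<lambda>i. x (h i)) [0..<n])"
    using RV unfolding realizableV_def by blast
  have n4: "n = 4" using h c bij_betw_same_card by fastforce
  have "realizable F 4 (gadget_fun G)" unfolding realizable_def using G n4 by blast
  then obtain \<mu> A B \<sigma> where AB: "A \<in> Bfrak F" "B \<in> Bfrak F" and \<sigma>: "\<sigma> permutes {0..<4}"
    and gf: "\<And>x. length x = 4 \<Longrightarrow> gadget_fun G x = \<mu> * A (x ! \<sigma> 0) (x ! \<sigma> 1) * B (x ! \<sigma> 2) (x ! \<sigma> 3)"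
    using ar4 by blast
  have qA: "qprop A" and qB: "qprop B" using Bfrak_qprop[OF fin grp K] AB by auto
  have s4: "\<sigma> i < 4" if "i < 4" for i using permutes_in_image[OF \<sigma>] that by auto
  have fx: "f x = \<mu> * A (x (h (\<sigma> 0))) (x (h (\<sigma> 1))) * B (x (h (\<sigma> 2))) (x (h (\<sigma> 3)))" for x
    unfolding f n4 using gf[of "map (\<lambda>i. x (h i)) [0..<4]"] s4 by simp
  have hV: "\<And>i. i < 4 \<Longrightarrow> h (\<sigma> i) \<in> V" using h s4 n4 unfolding bij_betw_def by auto
  show ?thesis
  proof (cases "\<mu> = 0")
    case True then show ?thesis using fx by (intro CR_zero) simp
  next
    case False
    have "thr V (\<lambda>x. f x / \<mu>)"
      unfolding thr_def
    proof
      fix x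
      have fl: "\<And>i. i < 4 \<Longrightarrow> flipV V x (h (\<sigma> i)) = (\<not> x (h (\<sigma> i)))" using hV by (auto simp: flipV_def)
      have fl0: "flipV V x (h (\<sigma> 0)) = (\<not> x (h (\<sigma> 0)))" by (rule fl) simp
      have fl1: "flipV V x (h (\<sigma> 1)) = (\<not> x (h (\<sigma> 1)))" by (rule fl) simp
      have fl2: "flipV V x (h (\<sigma> 2)) = (\<not> x (h (\<sigma> 2)))" by (rule fl) simp
      have fl3: "flipV V x (h (\<sigma> 3)) = (\<not> x (h (\<sigma> 3)))" by (rule fl) simp
      have "cnt V x = (\<Sum>l<4. of_bool (x (h l)))" using cnt_bij[OF h, of x] n4 by simp
      also have "\<dots> = (\<Sum>l<4. of_bool (x (h (\<sigma> l))))"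
        using sum.permute[OF \<sigma>[unfolded atLeast0LessThan], of "\<lambda>l. of_bool (x (h l))"] by (simp only: comp_def)
      also have "\<dots> = of_bool (x (h (\<sigma> 0))) + of_bool (x (h (\<sigma> 1))) + of_bool (x (h (\<sigma> 2))) + of_bool (x (h (\<sigma> 3)))"
        by (simp add: numeral_eq_Suc)
      finally have cn: "cnt V x = of_bool (x (h (\<sigma> 0))) + of_bool (x (h (\<sigma> 1))) + of_bool (x (h (\<sigma> 2))) + of_bool (x (h (\<sigma> 3)))" .
      show "f (flipV V x) / \<mu> = (-1) ^ cnt V x * cnj (f x / \<mu>)"
        unfolding fx fl0 fl1 fl2 fl3 cn
        using False qprop_flip[OF qA, of "x (h (\<sigma> 0))" "x (h (\<sigma> 1))"] qprop_flip[OF qB, of "x (h (\<sigma> 2))" "x (h (\<sigma> 3))"]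
        by (simp add: power_add)
    qed
    then show ?thesis unfolding CR_def using False by blast
  qed
qed

lemma mainCR: "realizableV F V f \<Longrightarrow> finite V \<Longrightarrow> even (card V) \<Longrightarrow> CR V f"
proof (induction "card V" arbitrary: V f rule: less_induct)
  case less
  have "card V = 0 \<or> card V = 2 \<or> card V = 4 \<or> card V \<ge> 6" using less.prems(3) by presburger
  then consider "card V = 0" | "card V = 2" | "card V = 4" | "card V \<ge> 6" by auto
  then show ?case
  proof cases
    case 1 then show ?thesis using base0 less.prems by blast
  next
    case 2 then show ?thesis using base2 less.prems by blast
  next
    case 3 then show ?thesis using base4 less.prems by blast
  next
    case 4
    show ?thesis
    proof (rule step[OF less.prems(2) 4])
      fix a b k assume ab: "a \<in> V" "b \<in> V" "a \<noteq> b" and k: "k \<in> Kset"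
      obtain A s where A: "realizable_bin F A" "det2 A \<noteq> 0" "s^2 = det2 A" and ks: "k = (\<lambda>u v. A u v / s)"
        using K k unfolding Bfrak_def by blast
      have s0: "s \<noteq> 0" using A by auto
      have RV': "realizableV F (V - {a,b}) (Cn a b A f)" by (rule RV_contract[OF less.prems(1) ab A(1)])
      have cV: "card (V - {a,b}) = card V - 2" using ab less.prems(2) by (simp add: card_Diff_subset)
      have "CR (V - {a,b}) (Cn a b A f)"
        by (rule less.hyps[OF _ RV']) (use cV 4 less.prems(2,3) in auto)
      then have "CR (V - {a,b}) (\<lambda>x. (1/s) * Cn a b A f x)" by (rule CR_scale[rotated]) (use s0 in simp)
      then show "CR (V - {a,b}) (Cn a b k f)"
        by (rule CR_cong) (simp add: ks Cn_def add_divide_distrib)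
    qed
  qed
qed

end

lemma sum_pairs: "(\<Sum>i<2*d. f i) = (\<Sum>j<d. f (2*j) + f (2*j+1)) " for f :: "nat \<Rightarrow> 'a::comm_monoid_add"
  by (induct d) (simp_all add: algebra_simps)

lemma Kc_real:
  fixes g :: "bool list \<Rightarrow> complex"
  assumes pi: "ordered_pairing d \<pi>" and psi: "\<forall>j<d. \<psi> j \<in> Kset"
    and sym: "\<And>xs. length xs = 2*d \<Longrightarrow> g (map Not xs) = (-1)^(\<Sum>i<2*d. of_bool (xs!i)) * cnj (g xs)"
  shows "Kcontract d \<pi> \<psi> g \<in> \<real>"
proof -
  let ?L = "{xs :: bool list. length xs = 2*d}"
  let ?P = "\<lambda>xs. \<Prod>j<d. \<psi> j (xs ! \<pi> (2*j)) (xs ! \<pi> (2*j+1))"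
  let ?C = "\<lambda>xs. (\<Sum>i<2*d. of_bool (xs!i)) :: nat"
  have pib: "bij_betw \<pi> {0..<2*d} {0..<2*d}" using pi unfolding ordered_pairing_def .
  have pilt: "\<pi> i < 2*d" if "i < 2*d" for i using pib that unfolding bij_betw_def by auto
  have Psym: "?P (map Not xs) = (-1)^(?C xs) * cnj (?P xs)" if xs: "length xs = 2*d" for xs
  proof -
    have "?P (map Not xs) = (\<Prod>j<d. (-1)^(of_bool (xs ! \<pi> (2*j)) + of_bool (xs ! \<pi> (2*j+1)))
                              * cnj (\<psi> j (xs ! \<pi> (2*j)) (xs ! \<pi> (2*j+1))))"
    proof (rule prod.cong[OF refl])
      fix j assume "j \<in> {..<d}"
      then have j: "j < d" by simp
      have l: "\<pi> (2*j) < 2*d" "\<pi> (2*j+1) < 2*d" using pilt j by auto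
      show "\<psi> j (map Not xs ! \<pi> (2*j)) (map Not xs ! \<pi> (2*j+1)) =
            (-1)^(of_bool (xs ! \<pi> (2*j)) + of_bool (xs ! \<pi> (2*j+1))) * cnj (\<psi> j (xs ! \<pi> (2*j)) (xs ! \<pi> (2*j+1)))"
        using l xs qprop_flip[OF qprop_K[of "\<psi> j"]] psi j by simp
    qed
    also have "\<dots> = (-1)^(\<Sum>j<d. of_bool (xs ! \<pi> (2*j)) + of_bool (xs ! \<pi> (2*j+1))) * cnj (?P xs)"
      by (simp add: prod.distrib power_sum)
    also have "(\<Sum>j<d. of_bool (xs ! \<pi> (2*j)) + of_bool (xs ! \<pi> (2*j+1))) = (\<Sum>i<2*d. of_bool (xs ! \<pi> i)::nat)"
      by (rule sum_pairs[symmetric])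
    also have "\<dots> = ?C xs"
    proof -
      have "(\<Sum>i\<in>{0..<2*d}. of_bool (xs ! \<pi> i)::nat) = (\<Sum>i\<in>{0..<2*d}. of_bool (xs ! i))"
        by (rule sum.reindex_bij_betw[OF pib])
      then show ?thesis by (simp add: atLeast0LessThan)
    qed
    finally show ?thesis .
  qed
  have tsym: "g (map Not xs) * ?P (map Not xs) = cnj (g xs * ?P xs)" if xs: "length xs = 2*d" for xs
  proof -
    have "g (map Not xs) * ?P (map Not xs) = ((-1)^(?C xs) * (-1)^(?C xs)) * cnj (g xs * ?P xs)"
      unfolding sym[OF xs] Psym[OF xs] by (simp add: algebra_simps)
    also have "(-1::complex)^(?C xs) * (-1)^(?C xs) = 1" by (simp add: power_add[symmetric])
    finally show ?thesis by simp
  qed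
  have "Kcontract d \<pi> \<psi> g = (\<Sum>xs\<in>?L. g (map Not xs) * ?P (map Not xs))"
    unfolding Kcontract_def
    by (rule sum.reindex_bij_witness[where i="map Not" and j="map Not"]) (auto simp: comp_def)
  also have "\<dots> = (\<Sum>xs\<in>?L. cnj (g xs * ?P xs))" by (rule sum.cong[OF refl], rule tsym) simp
  also have "\<dots> = cnj (Kcontract d \<pi> \<psi> g)" unfolding Kcontract_def by simp
  finally show ?thesis using Reals_cnj_iff by metis
qed


theorem mainTheorem8:
  fixes \<F> :: "sig set" and d :: nat and G :: gadget
    and \<pi> \<pi>' :: "nat \<Rightarrow> nat" and \<psi> \<psi>' :: "nat \<Rightarrow> mat2"
  assumes finF: "finite \<F>"
    and alg: "\<forall>f \<in> \<F>. \<forall>x. length x = fst f \<longrightarrow> algebraic (snd f x)"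
    and grp: "finite (Bfrak \<F>)" "group (mat_monoid (Bfrak \<F>))"
    and bin: "\<forall>A. realizable_bin \<F> A \<longrightarrow> (\<exists>c::complex. \<exists>B \<in> Bfrak \<F>. A = (\<lambda>u v. c * B u v))"
    and K: "Kset \<subseteq> Bfrak \<F>"
    and ar4: "\<forall>f. realizable \<F> 4 f \<longrightarrow>
       (\<exists>\<mu>::complex. \<exists>A \<in> Bfrak \<F>. \<exists>B \<in> Bfrak \<F>. \<exists>\<sigma>. \<sigma> permutes {0..<4} \<and>
          (\<forall>x. length x = 4 \<longrightarrow>
             f x = \<mu> * A (x ! \<sigma> 0) (x ! \<sigma> 1) * B (x ! \<sigma> 2) (x ! \<sigma> 3)))"
    and G: "wf_gadget \<F> (2*d) G"
    and pi: "ordered_pairing d \<pi>" "ordered_pairing d \<pi>'"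
    and psi: "\<forall>j<d. \<psi> j \<in> Kset" "\<forall>j<d. \<psi>' j \<in> Kset"
    and nz: "Kcontract d \<pi> \<psi> (gadget_fun G) \<noteq> 0"
  shows "Kcontract d \<pi>' \<psi>' (gadget_fun G) / Kcontract d \<pi> \<psi> (gadget_fun G) \<in> \<real>"
proof -
  let ?V = "{0..<2*d}"
  have RV: "realizableV \<F> ?V (\<lambda>x. gadget_fun G (map x [0..<2*d]))"
    unfolding realizableV_def using G by (intro exI[of _ "2*d"] exI[of _ G] exI[of _ id]) auto
  have "CR ?V (\<lambda>x. gadget_fun G (map x [0..<2*d]))"
    by (rule mainCR[OF grp K bin ar4 RV]) auto
  then obtain c where c: "c \<noteq> 0" and thr: "thr ?V (\<lambda>x. gadget_fun G (map x [0..<2*d]) / c)"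
    unfolding CR_def by blast
  define g where "g = (\<lambda>xs. gadget_fun G xs / c)"
  have gsym: "g (map Not xs) = (-1)^(\<Sum>i<2*d. of_bool (xs!i)) * cnj (g xs)" if xs: "length xs = 2*d" for xs
  proof -
    have m1: "map (\<lambda>i. xs ! i) [0..<2*d] = xs" using map_nth[of xs] xs by simp
    have m2: "map (flipV ?V (\<lambda>i. xs ! i)) [0..<2*d] = map Not xs"
      using xs by (intro nth_equalityI) (auto simp: flipV_def)
    have cn: "cnt ?V (\<lambda>i. xs ! i) = (\<Sum>i<2*d. of_bool (xs!i))" unfolding cnt_def by (simp add: atLeast0LessThan)
    show ?thesis using thr[unfolded thr_def, rule_format, of "\<lambda>i. xs ! i"] unfolding m1 m2 cn g_def .
  qed
  have scale: "Kcontract d p q (gadget_fun G) = c * Kcontract d p q g" for p q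
  proof -
    have "gadget_fun G xs = c * g xs" for xs using c unfolding g_def by simp
    then show ?thesis unfolding Kcontract_def by (simp add: sum_distrib_left algebra_simps)
  qed
  have r1: "Kcontract d \<pi> \<psi> g \<in> \<real>" by (rule Kc_real[OF pi(1) psi(1) gsym])
  have r2: "Kcontract d \<pi>' \<psi>' g \<in> \<real>" by (rule Kc_real[OF pi(2) psi(2) gsym])
  have "Kcontract d \<pi>' \<psi>' (gadget_fun G) / Kcontract d \<pi> \<psi> (gadget_fun G) = Kcontract d \<pi>' \<psi>' g / Kcontract d \<pi> \<psi> g"
    unfolding scale using c by simp
  then show ?thesis using r1 r2 by (simp add: Reals_divide)
qed

end
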